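(* Let $\mathcal{U},\mathcal{Y}$ be Hilbert spaces, $\mathcal{F}$ a closed subspace of $\mathcal{U}$ with $\mathcal{F}\neq\mathcal{U}$, and $\omega=\begin{pmatrix}\omega_1\\ \omega_2\end{pmatrix}:\mathcal{F}\to\mathcal{Y}\oplus\mathcal{U}$ a contraction. Let $H_c(\lambda)=\omega_1\Pi_{\mathcal{F}}(I_{\mathcal{U}}-\lambda\omega_2\Pi_{\mathcal{F}})^{-1}$, $\lambda\in\mathbb{D}$ (the central solution). Then $H_c$ is the only solution to the $H^2$ interpolation problem defined by $\omega$ if and only if $\Gamma_{H_c}:\mathcal{U}\to H^2(\mathcal{Y})$ is a co-isometry.
   Context: $\Pi_{\mathcal{F}}:\mathcal{U}\to\mathcal{F}$ is the orthogonal projection, so $\omega_2\Pi_{\mathcal{F}}$ is a contraction on $\mathcal{U}$. $\mathfrak{H}^2(\mathcal{U},\mathcal{Y})$ denotes the set of functions $H$ on the open unit disc $\mathbb{D}$ with values bounded operators $\mathcal{U}\to\mathcal{Y}$ such that $(\Gamma_Hu)(\lambda)=H(\lambda)u$ defines a bounded operator $\Gamma_H:\mathcal{U}\to H^2(\mathcal{Y})$; it is normed by $\|H\|=\|\Gamma_H\|$, and $\mathfrak{H}^2_{\mathrm{ball}}(\mathcal{U},\mathcal{Y})$ is its closed unit ball. A solution to the $H^2$ interpolation problem defined by $\omega$ is an $H\in\mathfrak{H}^2_{\mathrm{ball}}(\mathcal{U},\mathcal{Y})$ with $\omega_1+\lambda H(\lambda)\omega_2=H(\lambda)|_{\mathcal{F}}$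 for all $\lambda\in\mathbb{D}$. (It is known that $H_c$ is such a solution.) *)

theory Defs
  imports "HOL-Analysis.Analysis"
begin

class complex_hilbert = real_normed_vector + complete_space +
  fixes scaleC :: "complex \<Rightarrow> 'a \<Rightarrow> 'a" (infixr \<open>*\<^sub>C\<close> 75)
  fixes cinner :: "'a \<Rightarrow> 'a \<Rightarrow> complex"
  assumes scaleC_add_right: "a *\<^sub>C (x + y) = a *\<^sub>C x + a *\<^sub>C y"
    and scaleC_add_left: "(a + b) *\<^sub>C x = a *\<^sub>C x + b *\<^sub>C x"
    and scaleC_scaleC: "a *\<^sub>C (b *\<^sub>C x) = (a * b) *\<^sub>C x"
    and scaleC_one: "1 *\<^sub>C x = x"
    and scaleC_of_real: "complex_of_real r *\<^sub>C x = scaleR r x"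
    and cinner_commute: "cinner x y = cnj (cinner y x)"
    and cinner_add_right: "cinner x (y + z) = cinner x y + cinner x z"
    and cinner_scaleC_right: "cinner x (a *\<^sub>C y) = a * cinner x y"
    and cinner_self_norm: "cinner x x = complex_of_real ((norm x)\<^sup>2)"

definition clinear_on :: "'a::complex_hilbert set \<Rightarrow> ('a \<Rightarrow> 'b::complex_hilbert) \<Rightarrow> bool" where
  "clinear_on S f \<longleftrightarrow> (\<forall>x\<in>S. \<forall>y\<in>S. f (x + y) = f x + f y) \<and>
                       (\<forall>c. \<forall>x\<in>S. f (c *\<^sub>C x) = c *\<^sub>C f x)"

definition bounded_clinear_op :: "('a::complex_hilbert \<Rightarrow> 'b::complex_hilbert) \<Rightarrow> bool" where
  "bounded_clinear_op f \<longleftrightarrow> clinear_on UNIV f \<and> (\<exists>K. \<forall>x. norm (f x) \<le> norm x * K)"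

definition csubspace :: "'a::complex_hilbert set \<Rightarrow> bool" where
  "csubspace S \<longleftrightarrow> 0 \<in> S \<and> (\<forall>x\<in>S. \<forall>y\<in>S. x + y \<in> S) \<and> (\<forall>c. \<forall>x\<in>S. c *\<^sub>C x \<in> S)"

definition orth_proj :: "'a::complex_hilbert set \<Rightarrow> 'a \<Rightarrow> 'a" where
  "orth_proj F x = (THE p. p \<in> F \<and> (\<forall>f\<in>F. cinner f (x - p) = 0))"

definition h2_coeffs :: "(complex \<Rightarrow> 'y::complex_hilbert) \<Rightarrow> (nat \<Rightarrow> 'y) \<Rightarrow> bool" where
  "h2_coeffs f a \<longleftrightarrow> summable (\<lambda>n. (norm (a n))\<^sup>2) \<and>
      (\<forall>z\<in>ball 0 1. (\<lambda>n. (z ^ n) *\<^sub>C a n) sums f z)"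

definition in_H2 :: "(complex \<Rightarrow> 'y::complex_hilbert) \<Rightarrow> bool" where
  "in_H2 f \<longleftrightarrow> (\<exists>a. h2_coeffs f a)"

definition h2_coeff :: "(complex \<Rightarrow> 'y::complex_hilbert) \<Rightarrow> nat \<Rightarrow> 'y" where
  "h2_coeff f = (THE a. h2_coeffs f a)"

definition h2_inner :: "(complex \<Rightarrow> 'y::complex_hilbert) \<Rightarrow> (complex \<Rightarrow> 'y) \<Rightarrow> complex" where
  "h2_inner f g = (\<Sum>n. cinner (h2_coeff f n) (h2_coeff g n))"

definition h2_norm :: "(complex \<Rightarrow> 'y::complex_hilbert) \<Rightarrow> real" where
  "h2_norm f = sqrt (\<Sum>n. (norm (h2_coeff f n))\<^sup>2)"

definition Gamma :: "(complex \<Rightarrow> 'u::complex_hilbert \<Rightarrow> 'y::complex_hilbert) \<Rightarrow> 'u \<Rightarrow> complex \<Rightarrow> 'y" where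
  "Gamma H u = (\<lambda>z. H z u)"

definition in_frakH2 :: "(complex \<Rightarrow> 'u::complex_hilbert \<Rightarrow> 'y::complex_hilbert) \<Rightarrow> bool" where
  "in_frakH2 H \<longleftrightarrow> (\<forall>z\<in>ball 0 1. bounded_clinear_op (H z)) \<and>
     (\<forall>u. in_H2 (Gamma H u)) \<and> (\<exists>C. \<forall>u. h2_norm (Gamma H u) \<le> C * norm u)"

definition in_frakH2_ball :: "(complex \<Rightarrow> 'u::complex_hilbert \<Rightarrow> 'y::complex_hilbert) \<Rightarrow> bool" where
  "in_frakH2_ball H \<longleftrightarrow> in_frakH2 H \<and> (\<forall>u. h2_norm (Gamma H u) \<le> norm u)"

text \<open>Gamma_H is a co-isometry: it has an adjoint A : H^2(Y) \<rightarrow> U with Gamma_H A = I on H^2(Y)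
  (functions in H^2 are identified when they agree on the disc).\<close>
definition Gamma_coisometry :: "(complex \<Rightarrow> 'u::complex_hilbert \<Rightarrow> 'y::complex_hilbert) \<Rightarrow> bool" where
  "Gamma_coisometry H \<longleftrightarrow> in_frakH2 H \<and>
     (\<exists>A :: (complex \<Rightarrow> 'y) \<Rightarrow> 'u.
        (\<forall>g u. in_H2 g \<longrightarrow> h2_inner (Gamma H u) g = cinner u (A g)) \<and>
        (\<forall>g. in_H2 g \<longrightarrow> (\<forall>z\<in>ball 0 1. Gamma H (A g) z = g z)))"

definition H2_interp_solution ::
  "'u::complex_hilbert set \<Rightarrow> ('u \<Rightarrow> 'y::complex_hilbert) \<Rightarrow> ('u \<Rightarrow> 'u) \<Rightarrow> (complex \<Rightarrow> 'u \<Rightarrow> 'y) \<Rightarrow> bool" where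
  "H2_interp_solution F \<omega>1 \<omega>2 H \<longleftrightarrow> in_frakH2_ball H \<and>
     (\<forall>z\<in>ball 0 1. \<forall>x\<in>F. \<omega>1 x + z *\<^sub>C H z (\<omega>2 x) = H z x)"

definition central_solution ::
  "'u::complex_hilbert set \<Rightarrow> ('u \<Rightarrow> 'y::complex_hilbert) \<Rightarrow> ('u \<Rightarrow> 'u) \<Rightarrow> complex \<Rightarrow> 'u \<Rightarrow> 'y" where
  "central_solution F \<omega>1 \<omega>2 z u =
     \<omega>1 (orth_proj F (THE v. v - z *\<^sub>C \<omega>2 (orth_proj F v) = u))"

end

theory Submission
  imports Defs
begin

lemma cinner_add_left: "cinner (x + y) z = cinner x z + cinner y z"
proof -
  have "cinner (x + y) z = cnj (cinner z x + cinner z y)"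
    by (simp only: cinner_commute[of "x+y" z] cinner_add_right)
  also have "\<dots> = cinner x z + cinner y z"
    by (simp only: complex_cnj_add cinner_commute[of x z] cinner_commute[of y z] complex_cnj_cnj)
  finally show ?thesis .
qed

lemma cinner_scaleC_left: "cinner (a *\<^sub>C x) y = cnj a * cinner x y"
proof -
  have "cinner (a *\<^sub>C x) y = cnj (a * cinner y x)"
    by (simp only: cinner_commute[of "a *\<^sub>C x" y] cinner_scaleC_right)
  also have "\<dots> = cnj a * cinner x y"
    by (simp only: complex_cnj_mult cinner_commute[of x y] complex_cnj_cnj)
  finally show ?thesis .
qed

lemma cinner_zero_right [simp]: "cinner x 0 = 0"
  using cinner_add_right[of x 0 0] by simp

lemma cinner_zero_left [simp]: "cinner 0 x = 0"
  using cinner_add_left[of 0 0 x] by simp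

lemma scaleR_as_scaleC: "scaleR r x = complex_of_real r *\<^sub>C x"
  by (simp add: scaleC_of_real)

lemma scaleC_zero_left [simp]: "0 *\<^sub>C x = 0"
  using scaleC_of_real[of 0 x] by simp

lemma scaleC_zero_right [simp]: "a *\<^sub>C 0 = 0"
  using scaleC_add_right[of a 0 0] by simp

lemma minus_as_scaleC: "- x = (-1) *\<^sub>C x"
  using scaleC_of_real[of "-1" x] by simp

lemma scaleC_minus_right: "a *\<^sub>C (- x) = - (a *\<^sub>C x)"
  by (simp only: minus_as_scaleC[of x] minus_as_scaleC[of "a *\<^sub>C x"] scaleC_scaleC mult.commute)

lemma scaleC_minus_left: "(- a) *\<^sub>C x = - (a *\<^sub>C x)"
  by (simp only: minus_as_scaleC[of "a *\<^sub>C x"] scaleC_scaleC mult_minus1)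

lemma scaleC_diff_right: "a *\<^sub>C (x - y) = a *\<^sub>C x - a *\<^sub>C y"
  by (simp only: diff_conv_add_uminus scaleC_add_right scaleC_minus_right)

lemma scaleC_diff_left: "(a - b) *\<^sub>C x = a *\<^sub>C x - b *\<^sub>C x"
  by (simp only: diff_conv_add_uminus scaleC_add_left scaleC_minus_left)

lemma cinner_minus_right: "cinner x (- y) = - cinner x y"
  by (simp add: minus_as_scaleC[of y] cinner_scaleC_right)

lemma cinner_minus_left: "cinner (- x) y = - cinner x y"
  by (simp add: minus_as_scaleC[of x] cinner_scaleC_left)

lemma cinner_diff_right: "cinner x (y - z) = cinner x y - cinner x z"
  by (simp only: diff_conv_add_uminus cinner_add_right cinner_minus_right)

lemma cinner_diff_left: "cinner (x - y) z = cinner x z - cinner y z"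
  by (simp only: diff_conv_add_uminus cinner_add_left cinner_minus_left)

lemma cinner_self_real: "cinner x x = complex_of_real (Re (cinner x x))"
  by (simp add: cinner_self_norm)

lemma norm_sq_cinner: "(norm x)\<^sup>2 = Re (cinner x x)"
  by (simp add: cinner_self_norm)

lemma cinner_self_eq_zero [simp]: "cinner x x = 0 \<longleftrightarrow> x = 0"
  by (simp add: cinner_self_norm)

lemma cnj_mult_self: "cnj a * a = complex_of_real ((cmod a)\<^sup>2)"
  by (subst mult.commute) (rule complex_norm_square[symmetric])

lemma norm_scaleC: "norm (a *\<^sub>C x) = cmod a * norm x"
proof -
  have "(norm (a *\<^sub>C x))\<^sup>2 = Re (cnj a * a * cinner x x)"
    by (simp only: norm_sq_cinner cinner_scaleC_left cinner_scaleC_right mult.assoc mult.left_commute)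
  also have "\<dots> = (cmod a)\<^sup>2 * (norm x)\<^sup>2"
    unfolding cnj_mult_self cinner_self_norm by (simp only: Re_complex_of_real of_real_mult[symmetric])
  finally have "(norm (a *\<^sub>C x))\<^sup>2 = (cmod a * norm x)\<^sup>2" by (simp add: power_mult_distrib)
  then show ?thesis by (simp add: power2_eq_iff_nonneg)
qed

lemma norm_add_sq: "(norm (x + y))\<^sup>2 = (norm x)\<^sup>2 + 2 * Re (cinner x y) + (norm y)\<^sup>2"
proof -
  have "(norm (x + y))\<^sup>2 = Re (cinner x x + cinner x y + cinner y x + cinner y y)"
    by (simp add: norm_sq_cinner cinner_add_left cinner_add_right)
  also have "\<dots> = (norm x)\<^sup>2 + 2 * Re (cinner x y) + (norm y)\<^sup>2"
    by (simp add: norm_sq_cinner cinner_commute[of y x])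
  finally show ?thesis .
qed

lemma norm_diff_sq: "(norm (x - y))\<^sup>2 = (norm x)\<^sup>2 - 2 * Re (cinner x y) + (norm y)\<^sup>2"
  using norm_add_sq[of x "- y"] by (simp add: cinner_minus_right)

lemma Cauchy_Schwarz_c: "cmod (cinner x y) \<le> norm x * norm y"
proof (cases "y = 0")
  case True then show ?thesis by simp
next
  case False
  define n where "n = (norm y)\<^sup>2"
  have n: "n > 0" using False by (simp add: n_def)
  define t where "t = cinner y x / complex_of_real n"
  have ct: "cinner x (t *\<^sub>C y) = complex_of_real ((cmod (cinner x y))\<^sup>2 / n)"
  proof -
    have "cinner x (t *\<^sub>C y) = cinner y x * cinner x y / complex_of_real n"
      by (simp add: t_def cinner_scaleC_right)
    also have "cinner y x * cinner x y = complex_of_real ((cmod (cinner x y))\<^sup>2)"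
      by (simp only: cinner_commute[of y x] cnj_mult_self)
    finally show ?thesis by simp
  qed
  have ny: "(norm (t *\<^sub>C y))\<^sup>2 = (cmod (cinner x y))\<^sup>2 / n"
  proof -
    have "(norm (t *\<^sub>C y))\<^sup>2 = (cmod t)\<^sup>2 * n" by (simp add: norm_scaleC power_mult_distrib n_def)
    also have "cmod t = cmod (cinner x y) / n"
      using n by (simp add: t_def norm_divide cinner_commute[of y x])
    finally show ?thesis using n by (simp add: power2_eq_square)
  qed
  have "0 \<le> (norm (x - t *\<^sub>C y))\<^sup>2" by simp
  also have "\<dots> = (norm x)\<^sup>2 - (cmod (cinner x y))\<^sup>2 / n"
    by (simp only: norm_diff_sq ct ny Re_complex_of_real)
  finally have "(cmod (cinner x y))\<^sup>2 / n \<le> (norm x)\<^sup>2" by simp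
  then have "(cmod (cinner x y))\<^sup>2 \<le> (norm x)\<^sup>2 * n" using n by (simp add: pos_divide_le_eq)
  then have "(cmod (cinner x y))\<^sup>2 \<le> (norm x * norm y)\<^sup>2" by (simp add: n_def power_mult_distrib)
  then show ?thesis by (rule power2_le_imp_le) simp
qed

lemma cinner_ext: "(\<And>w. cinner w x = cinner w y) \<Longrightarrow> x = y"
proof -
  assume h: "\<And>w. cinner w x = cinner w y"
  have "cinner (x - y) (x - y) = 0" by (simp add: cinner_diff_right h)
  then show "x = y" by simp
qed

lemma bounded_linear_cinner_right: "bounded_linear (cinner w)"
proof
  show "cinner w (x + y) = cinner w x + cinner w y" for x y by (rule cinner_add_right)
  show "cinner w (r *\<^sub>R x) = r *\<^sub>R cinner w x" for r x
    by (simp add: scaleR_as_scaleC cinner_scaleC_right scaleR_conv_of_real)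
  show "\<exists>K. \<forall>x. norm (cinner w x) \<le> norm x * K"
    by (rule exI[of _ "norm w"]) (metis Cauchy_Schwarz_c mult.commute)
qed

lemma bounded_linear_scaleC: "bounded_linear (\<lambda>x::'a::complex_hilbert. a *\<^sub>C x)"
proof
  show "a *\<^sub>C (x + y) = a *\<^sub>C x + a *\<^sub>C y" for x y :: 'a by (rule scaleC_add_right)
  show "a *\<^sub>C (r *\<^sub>R x) = r *\<^sub>R (a *\<^sub>C x)" for r and x :: 'a
    by (simp add: scaleR_as_scaleC scaleC_scaleC mult.commute)
  show "\<exists>K. \<forall>x::'a. norm (a *\<^sub>C x) \<le> norm x * K"
    by (rule exI[of _ "cmod a"]) (simp add: norm_scaleC mult.commute)
qed

lemma bounded_linear_scaleC_left: "bounded_linear (\<lambda>a. a *\<^sub>C x)"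
proof
  show "(a + b) *\<^sub>C x = a *\<^sub>C x + b *\<^sub>C x" for a b by (rule scaleC_add_left)
  show "(r *\<^sub>R a) *\<^sub>C x = r *\<^sub>R (a *\<^sub>C x)" for r a
    by (simp add: scaleR_as_scaleC scaleC_scaleC scaleR_conv_of_real)
  show "\<exists>K. \<forall>a. norm (a *\<^sub>C x) \<le> norm a * K"
    by (rule exI[of _ "norm x"]) (simp add: norm_scaleC)
qed

lemma cinner_scaleC_both: "cinner (a *\<^sub>C x) (b *\<^sub>C y) = cnj a * b * cinner x y"
  by (simp add: cinner_scaleC_left cinner_scaleC_right mult.assoc)


lemma norm_diff_sq': "(norm (x - y))\<^sup>2 = (norm x)\<^sup>2 - 2 * Re (cinner y x) + (norm y)\<^sup>2"
  using norm_diff_sq[of x y] by (simp add: cinner_commute[of x y])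

lemma parallelogram: fixes a b :: "'a::complex_hilbert" shows "(norm (a + b))\<^sup>2 + (norm (a - b))\<^sup>2 = 2 * (norm a)\<^sup>2 + 2 * (norm b)\<^sup>2"
  unfolding norm_add_sq norm_diff_sq by simp

section \<open>Subspaces and projections\<close>

lemma csubspace_0: "csubspace S \<Longrightarrow> 0 \<in> S" by (simp add: csubspace_def)
lemma csubspace_add: "csubspace S \<Longrightarrow> x \<in> S \<Longrightarrow> y \<in> S \<Longrightarrow> x + y \<in> S" by (simp add: csubspace_def)
lemma csubspace_scaleC: "csubspace S \<Longrightarrow> x \<in> S \<Longrightarrow> c *\<^sub>C x \<in> S" by (simp add: csubspace_def)
lemma csubspace_minus: "csubspace S \<Longrightarrow> x \<in> S \<Longrightarrow> - x \<in> S"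
  by (simp add: minus_as_scaleC[of x] csubspace_scaleC)
lemma csubspace_diff: "csubspace S \<Longrightarrow> x \<in> S \<Longrightarrow> y \<in> S \<Longrightarrow> x - y \<in> S"
  using csubspace_add[of S x "- y"] csubspace_minus[of S y] by simp

lemma orth_min:
  fixes x p :: "'a::complex_hilbert"
  assumes S: "csubspace S" and pS: "p \<in> S" and min: "\<And>q. q \<in> S \<Longrightarrow> norm (x - p) \<le> norm (x - q)"
  shows "\<forall>f\<in>S. cinner f (x - p) = 0"
proof
  fix f assume fS: "f \<in> S"
  define c where "c = cinner (x - p) f"
  define k where "k = (norm f)\<^sup>2 + 1"
  have k: "k > 0" using zero_le_power2[of "norm f"] unfolding k_def by linarith
  define t where "t = complex_of_real (1 / k) * cnj c"
  have "p + t *\<^sub>C f \<in> S" using S pS fS by (simp add: csubspace_add csubspace_scaleC)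
  then have "norm (x - p) \<le> norm (x - (p + t *\<^sub>C f))" by (rule min)
  then have "(norm (x - p))\<^sup>2 \<le> (norm ((x - p) - t *\<^sub>C f))\<^sup>2"
    by (simp add: diff_diff_eq)
  also have "\<dots> = (norm (x - p))\<^sup>2 - 2 * Re (t * c) + (cmod t)\<^sup>2 * (norm f)\<^sup>2"
    by (simp add: norm_diff_sq cinner_scaleC_right norm_scaleC power_mult_distrib c_def)
  finally have "2 * Re (t * c) \<le> (cmod t)\<^sup>2 * (norm f)\<^sup>2" by simp
  moreover have "t * c = complex_of_real ((cmod c)\<^sup>2 / k)"
    by (simp add: t_def mult.assoc cnj_mult_self)
  moreover have "cmod t = cmod c / k"
    using k by (simp only: t_def norm_mult complex_mod_cnj norm_of_real) simp
  ultimately have "2 * ((cmod c)\<^sup>2 / k) \<le> (cmod c / k)\<^sup>2 * (norm f)\<^sup>2" by simp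
  then have "2 * (cmod c)\<^sup>2 * k \<le> (cmod c)\<^sup>2 * (norm f)\<^sup>2"
    using k by (simp add: field_simps power2_eq_square)
  then have "(cmod c)\<^sup>2 * (2 * k - (norm f)\<^sup>2) \<le> 0" by (simp add: algebra_simps)
  moreover have "2 * k - (norm f)\<^sup>2 > 0" using zero_le_power2[of "norm f"] unfolding k_def by (smt (verit))
  ultimately have "(cmod c)\<^sup>2 \<le> 0" by (simp add: mult_le_0_iff)
  then have "c = 0" by simp
  then show "cinner f (x - p) = 0" by (simp add: c_def cinner_commute[of "x - p"])
qed

lemma proj_exists:
  fixes x :: "'a::complex_hilbert"
  assumes S: "csubspace S" and cl: "closed S"
  shows "\<exists>p\<in>S. \<forall>f\<in>S. cinner f (x - p) = 0"
proof -
  define D where "D = (\<lambda>s. norm (x - s)) ` S"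
  define d where "d = Inf D"
  have Dne: "D \<noteq> {}" using csubspace_0[OF S] by (auto simp: D_def)
  have bdd: "bdd_below D" by (auto simp: D_def intro!: bdd_belowI[of _ 0])
  have dle: "d \<le> norm (x - s)" if "s \<in> S" for s
    unfolding d_def using that bdd by (auto simp: D_def intro!: cInf_lower)
  have d0: "d \<ge> 0" unfolding d_def using Dne by (auto simp: D_def intro!: cInf_greatest)
  have exs: "\<exists>s\<in>S. (norm (x - s))\<^sup>2 < d\<^sup>2 + 1 / (real n + 1)" for n
  proof -
    have "d\<^sup>2 < d\<^sup>2 + 1 / (real n + 1)" by (simp add: add_pos_nonneg)
    then have "sqrt (d\<^sup>2) < sqrt (d\<^sup>2 + 1 / (real n + 1))" by (rule real_sqrt_less_mono)
    then have "d < sqrt (d\<^sup>2 + 1 / (real n + 1))" using d0 by simp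
    then obtain s where "s \<in> S" "norm (x - s) < sqrt (d\<^sup>2 + 1 / (real n + 1))"
      using cInf_lessD[OF Dne] by (auto simp: d_def D_def)
    moreover have "0 \<le> d\<^sup>2 + 1 / (real n + 1)" by simp
    ultimately show ?thesis
      by (metis norm_ge_zero power_strict_mono real_sqrt_pow2 zero_less_numeral pos2)
  qed
  have "\<forall>n. \<exists>s. s \<in> S \<and> (norm (x - s))\<^sup>2 < d\<^sup>2 + 1 / (real n + 1)" using exs by blast
  from choice[OF this] obtain s where "\<forall>n. s n \<in> S \<and> (norm (x - s n))\<^sup>2 < d\<^sup>2 + 1 / (real n + 1)"
    by blast
  then have sS: "\<And>n. s n \<in> S" and sd: "\<And>n. (norm (x - s n))\<^sup>2 < d\<^sup>2 + 1 / (real n + 1)"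
    by auto
  have dist_sq: "(norm (s n - s m))\<^sup>2 \<le> 2 / (real n + 1) + 2 / (real m + 1)" for n m
  proof -
    have mid: "(1/2) *\<^sub>C (s n + s m) \<in> S" using S sS by (simp add: csubspace_add csubspace_scaleC)
    have eq: "(x - s m) + (x - s n) = 2 *\<^sub>R (x - (1/2) *\<^sub>C (s n + s m))"
    proof -
      have "2 *\<^sub>R ((1/2) *\<^sub>C (s n + s m)) = s n + s m"
        by (simp add: scaleR_as_scaleC scaleC_scaleC scaleC_one)
      then show ?thesis by (simp add: scaleR_diff_right algebra_simps scaleR_2)
    qed
    have "(norm ((x - s m) + (x - s n)))\<^sup>2 \<ge> 4 * d\<^sup>2"
    proof -
      have "norm ((x - s m) + (x - s n)) = 2 * norm (x - (1/2) *\<^sub>C (s n + s m))"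
        by (simp add: eq)
      also have "\<dots> \<ge> 2 * d" using dle[OF mid] by simp
      finally have "2 * d \<le> norm ((x - s m) + (x - s n))" .
      then have "(2 * d)\<^sup>2 \<le> (norm ((x - s m) + (x - s n)))\<^sup>2"
        using d0 by (intro power_mono) auto
      then show ?thesis by (simp add: power_mult_distrib)
    qed
    moreover have "(x - s m) - (x - s n) = s n - s m" by simp
    ultimately show ?thesis
      using parallelogram[of "x - s m" "x - s n"] sd[of n] sd[of m] by simp
  qed
  have "Cauchy s"
  proof (rule metric_CauchyI)
    fix e :: real assume e: "e > 0"
    obtain N :: nat where N: "4 / e\<^sup>2 < real N" using reals_Archimedean2 by blast
    show "\<exists>M. \<forall>m\<ge>M. \<forall>n\<ge>M. dist (s m) (s n) < e"
    proof (intro exI allI impI)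
      fix m n assume m: "N \<le> m" and n: "N \<le> n"
      have e2: "e\<^sup>2 > 0" using e by simp
      have a: "2 / (real m + 1) < e\<^sup>2 / 2"
      proof -
        have "4 / e\<^sup>2 < real m + 1" using N m by linarith
        then have "4 < e\<^sup>2 * (real m + 1)" using e2 by (simp add: field_simps)
        then show ?thesis by (simp add: field_simps)
      qed
      have b: "2 / (real n + 1) < e\<^sup>2 / 2"
      proof -
        have "4 / e\<^sup>2 < real n + 1" using N n by linarith
        then have "4 < e\<^sup>2 * (real n + 1)" using e2 by (simp add: field_simps)
        then show ?thesis by (simp add: field_simps)
      qed
      have "(norm (s m - s n))\<^sup>2 < e\<^sup>2" using dist_sq[of m n] a b by linarith
      then have "norm (s m - s n) < e" using e by (simp add: power_less_imp_less_base)
      then show "dist (s m) (s n) < e" by (simp add: dist_norm)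
    qed
  qed
  then obtain p where lim: "s \<longlonglongrightarrow> p" using Cauchy_convergent_iff convergent_def by blast
  have pS: "p \<in> S" using cl lim sS closed_sequentially by blast
  have pmin: "norm (x - p) \<le> norm (x - q)" if qS: "q \<in> S" for q
  proof (rule field_le_epsilon)
    fix e :: real assume e: "e > 0"
    have "\<forall>\<^sub>F n in sequentially. norm (s n - p) < e / 2"
      using tendstoD[OF lim, of "e/2"] e by (simp add: dist_norm)
    moreover obtain N :: nat where N: "1 / (e / 2)\<^sup>2 < real N" using reals_Archimedean2 by blast
    ultimately obtain N1 where N1: "\<And>n. n \<ge> N1 \<Longrightarrow> norm (s n - p) < e / 2"
      by (auto simp: eventually_sequentially)
    define n where "n = max N N1"
    have n: "norm (s n - p) < e / 2" using N1 by (simp add: n_def)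
    have nN: "n \<ge> N" by (simp add: n_def)
    have "1 / (real n + 1) < (e/2)\<^sup>2"
    proof -
      have "1 / (e/2)\<^sup>2 < real n + 1" using N nN by linarith
      then show ?thesis using e by (simp add: field_simps)
    qed
    then have "(norm (x - s n))\<^sup>2 < d\<^sup>2 + (e/2)\<^sup>2" using sd[of n] by linarith
    also have "\<dots> \<le> (d + e/2)\<^sup>2" using d0 e by (simp add: power2_sum)
    finally have "norm (x - s n) < d + e/2"
      using d0 e by (simp add: power_less_imp_less_base)
    moreover have "norm (x - p) \<le> norm (x - s n) + norm (s n - p)"
      using norm_triangle_ineq[of "x - s n" "s n - p"] by simp
    ultimately have "norm (x - p) < d + e" using n by linarith
    then show "norm (x - p) \<le> norm (x - q) + e" using dle[OF qS] by linarith
  qed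
  show ?thesis using orth_min[OF S pS pmin] pS by blast
qed


locale closed_sub =
  fixes S :: "'a::complex_hilbert set"
  assumes sub: "csubspace S" and cl: "closed S"
begin

lemma proj_unique:
  assumes "p \<in> S" "\<forall>f\<in>S. cinner f (x - p) = 0" "q \<in> S" "\<forall>f\<in>S. cinner f (x - q) = 0"
  shows "p = q"
proof -
  have "q - p \<in> S" using assms sub by (simp add: csubspace_diff)
  moreover have "cinner f (q - p) = 0" if "f \<in> S" for f
  proof -
    have "q - p = (x - p) - (x - q)" by simp
    then show ?thesis using assms that by (simp add: cinner_diff_right)
  qed
  ultimately have "cinner (q - p) (q - p) = 0" by blast
  then show ?thesis by simp
qed

lemma proj_char: "orth_proj S x \<in> S \<and> (\<forall>f\<in>S. cinner f (x - orth_proj S x) = 0)"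
proof -
  obtain p where p: "p \<in> S" "\<forall>f\<in>S. cinner f (x - p) = 0" using proj_exists[OF sub cl] by blast
  have "\<exists>!p. p \<in> S \<and> (\<forall>f\<in>S. cinner f (x - p) = 0)"
    using p proj_unique by blast
  then show ?thesis unfolding orth_proj_def by (rule theI')
qed

lemma proj_in: "orth_proj S x \<in> S" using proj_char by blast
lemma proj_orth: "f \<in> S \<Longrightarrow> cinner f (x - orth_proj S x) = 0" using proj_char by blast
lemma proj_orth': "f \<in> S \<Longrightarrow> cinner (x - orth_proj S x) f = 0"
  using proj_orth by (metis cinner_commute complex_cnj_zero)

lemma proj_eqI: "p \<in> S \<Longrightarrow> (\<And>f. f \<in> S \<Longrightarrow> cinner f (x - p) = 0) \<Longrightarrow> orth_proj S x = p"
  using proj_unique proj_char by blast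

lemma proj_id: "x \<in> S \<Longrightarrow> orth_proj S x = x"
  by (rule proj_eqI) auto

lemma proj_add: "orth_proj S (x + y) = orth_proj S x + orth_proj S y"
proof (rule proj_eqI)
  show "orth_proj S x + orth_proj S y \<in> S" using sub proj_in by (simp add: csubspace_add)
  fix f assume f: "f \<in> S"
  have eq: "x + y - (orth_proj S x + orth_proj S y) = (x - orth_proj S x) + (y - orth_proj S y)" by simp
  show "cinner f (x + y - (orth_proj S x + orth_proj S y)) = 0"
    unfolding eq cinner_add_right using f by (simp add: proj_orth)
qed

lemma proj_scaleC: "orth_proj S (c *\<^sub>C x) = c *\<^sub>C orth_proj S x"
proof (rule proj_eqI)
  show "c *\<^sub>C orth_proj S x \<in> S" using sub proj_in by (simp add: csubspace_scaleC)
  fix f assume f: "f \<in> S"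
  have "c *\<^sub>C x - c *\<^sub>C orth_proj S x = c *\<^sub>C (x - orth_proj S x)" by (simp add: scaleC_diff_right)
  then show "cinner f (c *\<^sub>C x - c *\<^sub>C orth_proj S x) = 0"
    using f by (simp add: cinner_scaleC_right proj_orth)
qed

lemma proj_zero: "orth_proj S 0 = 0" using proj_id sub csubspace_0 by blast

lemma proj_minus: "orth_proj S (- x) = - orth_proj S x"
  by (simp add: minus_as_scaleC proj_scaleC)

lemma proj_diff: "orth_proj S (x - y) = orth_proj S x - orth_proj S y"
  unfolding diff_conv_add_uminus by (simp only: proj_add proj_minus)

lemma proj_pyth: "(norm x)\<^sup>2 = (norm (orth_proj S x))\<^sup>2 + (norm (x - orth_proj S x))\<^sup>2"
proof -
  have "x = orth_proj S x + (x - orth_proj S x)" by simp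
  then have "(norm x)\<^sup>2 = (norm (orth_proj S x + (x - orth_proj S x)))\<^sup>2" by simp
  also have "\<dots> = (norm (orth_proj S x))\<^sup>2 + (norm (x - orth_proj S x))\<^sup>2"
    by (simp only: norm_add_sq proj_orth[OF proj_in]) simp
  finally show ?thesis .
qed

lemma proj_norm: "norm (orth_proj S x) \<le> norm x"
  using proj_pyth[of x] by (metis le_add_same_cancel1 norm_ge_zero power2_le_imp_le zero_le_power2)

lemma proj_cinner: "f \<in> S \<Longrightarrow> cinner f (orth_proj S x) = cinner f x"
  using proj_orth[of f x] by (simp add: cinner_diff_right)

lemma proj_cinner': "f \<in> S \<Longrightarrow> cinner (orth_proj S x) f = cinner x f"
  using proj_orth'[of f x] by (simp add: cinner_diff_left)

lemma proj_zero_iff: "(\<And>f. f \<in> S \<Longrightarrow> cinner f x = 0) \<Longrightarrow> orth_proj S x = 0"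
  by (rule proj_eqI) (auto simp: sub csubspace_0)

lemma bounded_linear_proj: "bounded_linear (orth_proj S)"
proof
  show "orth_proj S (x + y) = orth_proj S x + orth_proj S y" for x y by (rule proj_add)
  show "orth_proj S (r *\<^sub>R x) = r *\<^sub>R orth_proj S x" for r x by (simp add: scaleR_as_scaleC proj_scaleC)
  show "\<exists>K. \<forall>x. norm (orth_proj S x) \<le> norm x * K"
    by (rule exI[of _ 1]) (simp add: proj_norm)
qed

lemma riesz:
  fixes \<psi> :: "'a \<Rightarrow> complex"
  assumes add: "\<And>x y. x \<in> S \<Longrightarrow> y \<in> S \<Longrightarrow> \<psi> (x + y) = \<psi> x + \<psi> y"
    and scal: "\<And>c x. x \<in> S \<Longrightarrow> \<psi> (c *\<^sub>C x) = c * \<psi> x"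
    and bnd: "\<And>x. x \<in> S \<Longrightarrow> cmod (\<psi> x) \<le> K * norm x"
  shows "\<exists>f\<in>S. \<forall>x\<in>S. \<psi> x = cinner f x"
proof (cases "\<forall>x\<in>S. \<psi> x = 0")
  case True then show ?thesis using sub csubspace_0 by (metis cinner_zero_left)
next
  case False
  then obtain z where zS: "z \<in> S" and z: "\<psi> z \<noteq> 0" by blast
  define Kr where "Kr = {x\<in>S. \<psi> x = 0}"
  have diffS: "\<psi> (x - y) = \<psi> x - \<psi> y" if "x \<in> S" "y \<in> S" for x y
  proof -
    have "\<psi> (x - y) + \<psi> y = \<psi> x" using add[of "x - y" y] that sub by (simp add: csubspace_diff)
    then show ?thesis by (simp add: eq_diff_eq)
  qed
  have Ksub: "csubspace Kr"
    unfolding csubspace_def Kr_def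
  proof (intro conjI ballI allI)
    show "0 \<in> {x \<in> S. \<psi> x = 0}" using scal[of 0 0] sub csubspace_0 by fastforce
    show "x + y \<in> {x \<in> S. \<psi> x = 0}" if "x \<in> {x \<in> S. \<psi> x = 0}" "y \<in> {x \<in> S. \<psi> x = 0}" for x y
      using that add sub by (simp add: csubspace_add)
    show "c *\<^sub>C x \<in> {x \<in> S. \<psi> x = 0}" if "x \<in> {x \<in> S. \<psi> x = 0}" for c x
      using that scal sub by (simp add: csubspace_scaleC)
  qed
  have Kcl: "closed Kr"
    unfolding closed_sequential_limits
  proof (intro allI impI, elim conjE)
    fix xs l assume xs: "\<forall>n. xs n \<in> Kr" and lim: "xs \<longlonglongrightarrow> l"
    have lS: "l \<in> S" using cl xs lim closed_sequentially unfolding Kr_def by blast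
    have "cmod (\<psi> l) \<le> K * norm (l - xs n)" for n
    proof -
      have "\<psi> l = \<psi> (l - xs n)" using diffS[OF lS, of "xs n"] xs by (simp add: Kr_def)
      then show ?thesis using bnd[of "l - xs n"] sub lS xs by (simp add: Kr_def csubspace_diff)
    qed
    moreover have "(\<lambda>n. K * norm (l - xs n)) \<longlonglongrightarrow> K * 0"
    proof -
      have "(\<lambda>n. l - xs n) \<longlonglongrightarrow> 0" using tendsto_diff[OF tendsto_const[of l] lim] by simp
      then have "(\<lambda>n. norm (l - xs n)) \<longlonglongrightarrow> 0" using tendsto_norm_zero by blast
      then show ?thesis by (intro tendsto_mult tendsto_const)
    qed
    ultimately have "cmod (\<psi> l) \<le> 0"
      by (intro tendsto_le[OF _ _ tendsto_const]) auto
    then show "l \<in> Kr" using lS by (simp add: Kr_def)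
  qed
  interpret K: closed_sub Kr by standard (fact Ksub, fact Kcl)
  define w where "w = z - orth_proj Kr z"
  have wS: "w \<in> S" using zS K.proj_in sub by (simp add: w_def Kr_def csubspace_diff)
  have pK: "orth_proj Kr z \<in> Kr" by (rule K.proj_in)
  have pw: "\<psi> w = \<psi> z" using diffS[OF zS, of "orth_proj Kr z"] pK by (simp add: w_def Kr_def)
  then have w0: "w \<noteq> 0" using z scal[of 0 0] sub csubspace_0 by fastforce
  have worth: "cinner w k = 0" if "k \<in> Kr" for k
    using K.proj_orth'[OF that] by (simp add: w_def)
  define f where "f = (cnj (\<psi> w) / complex_of_real ((norm w)\<^sup>2)) *\<^sub>C w"
  show ?thesis
  proof (intro bexI ballI)
    show "f \<in> S" using wS sub by (simp add: f_def csubspace_scaleC)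
    fix x assume xS: "x \<in> S"
    define y where "y = x - (\<psi> x / \<psi> w) *\<^sub>C w"
    have yS: "y \<in> S" using xS wS sub by (simp add: y_def csubspace_diff csubspace_scaleC)
    have "\<psi> y = \<psi> x - (\<psi> x / \<psi> w) * \<psi> w"
      using diffS[OF xS, of "(\<psi> x / \<psi> w) *\<^sub>C w"] wS sub scal by (simp add: y_def csubspace_scaleC)
    also have "\<dots> = 0" using pw z by simp
    finally have "y \<in> Kr" using yS by (simp add: Kr_def)
    then have "cinner w y = 0" by (rule worth)
    then have "cinner w x = (\<psi> x / \<psi> w) * cinner w w"
      by (simp add: y_def cinner_diff_right cinner_scaleC_right)
    then have "cinner w x = (\<psi> x / \<psi> w) * complex_of_real ((norm w)\<^sup>2)" by (simp add: cinner_self_norm)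
    then show "\<psi> x = cinner f x"
      using w0 pw z by (simp add: f_def cinner_scaleC_left field_simps)
  qed
qed

end


instance complex_hilbert \<subseteq> banach ..

section \<open>Power series coefficients\<close>

lemma powser_zero_coeffs_aux:
  fixes c :: "nat \<Rightarrow> complex"
  shows "(\<forall>z. z \<noteq> 0 \<and> norm z < 1 \<longrightarrow> (\<lambda>n. c n * z ^ n) sums 0) \<Longrightarrow> c m = 0"
proof (induction m arbitrary: c)
  have base: "c 0 = 0" if h: "\<forall>z. z \<noteq> 0 \<and> norm z < 1 \<longrightarrow> (\<lambda>n. c n * z ^ n) sums 0" for c :: "nat \<Rightarrow> complex"
  proof -
    have "((\<lambda>_. 0::complex) \<longlongrightarrow> c 0) (at (0::complex))"
      using powser_limit_0_strong[where s=1 and a=c and f="\<lambda>_. 0"] h by auto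
    from LIM_const_eq[OF this] show ?thesis by simp
  qed
  case 0 then show ?case using base by blast
next
  case (Suc m)
  have c0: "c 0 = 0"
  proof -
    have "((\<lambda>_. 0::complex) \<longlongrightarrow> c 0) (at (0::complex))"
      using powser_limit_0_strong[where s=1 and a=c and f="\<lambda>_. 0"] Suc.prems by auto
    from LIM_const_eq[OF this] show ?thesis by simp
  qed
  have "\<forall>z. z \<noteq> 0 \<and> norm z < 1 \<longrightarrow> (\<lambda>n. c (Suc n) * z ^ n) sums 0"
  proof (intro allI impI)
    fix z :: complex assume z: "z \<noteq> 0 \<and> norm z < 1"
    have "(\<lambda>n. c n * z ^ n) sums 0" using Suc.prems z by blast
    then have "(\<lambda>n. c (Suc n) * z ^ (Suc n)) sums 0" using c0 by (subst sums_Suc_iff) simp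
    then have "(\<lambda>n. (1 / z) * (c (Suc n) * z ^ (Suc n))) sums ((1/z) * 0)" by (rule sums_mult)
    moreover have "(1 / z) * (c (Suc n) * z ^ (Suc n)) = c (Suc n) * z ^ n" for n
      using z by (simp add: field_simps)
    ultimately show "(\<lambda>n. c (Suc n) * z ^ n) sums 0" by simp
  qed
  then show ?case using Suc.IH[of "\<lambda>n. c (Suc n)"] by simp
qed

lemma coeff_unique:
  fixes a b :: "nat \<Rightarrow> 'y::complex_hilbert"
  assumes a: "\<forall>z\<in>ball 0 1. (\<lambda>n. z ^ n *\<^sub>C a n) sums f z"
    and b: "\<forall>z\<in>ball 0 1. (\<lambda>n. z ^ n *\<^sub>C b n) sums f z"
  shows "a = b"
proof
  fix m
  have "cinner w (a m) = cinner w (b m)" for w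
  proof -
    have "(\<lambda>n. (cinner w (a n) - cinner w (b n)) * z ^ n) sums 0" if z: "z \<noteq> 0 \<and> norm z < 1" for z
    proof -
      have zb: "z \<in> ball 0 1" using z by simp
      have "(\<lambda>n. cinner w (z ^ n *\<^sub>C a n)) sums cinner w (f z)"
        using bounded_linear.sums[OF bounded_linear_cinner_right a[rule_format, OF zb]] .
      moreover have "(\<lambda>n. cinner w (z ^ n *\<^sub>C b n)) sums cinner w (f z)"
        using bounded_linear.sums[OF bounded_linear_cinner_right b[rule_format, OF zb]] .
      ultimately have "(\<lambda>n. cinner w (z ^ n *\<^sub>C a n) - cinner w (z ^ n *\<^sub>C b n)) sums (cinner w (f z) - cinner w (f z))"
        by (rule sums_diff)
      then show ?thesis by (simp add: cinner_scaleC_right algebra_simps)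
    qed
    then have "cinner w (a m) - cinner w (b m) = 0"
      using powser_zero_coeffs_aux[of "\<lambda>n. cinner w (a n) - cinner w (b n)" m] by blast
    then show ?thesis by simp
  qed
  then show "a m = b m" using cinner_ext by blast
qed

section \<open>Square summable sequences\<close>

definition sqs :: "(nat \<Rightarrow> 'y::complex_hilbert) \<Rightarrow> bool" where
  "sqs a \<longleftrightarrow> summable (\<lambda>n. (norm (a n))\<^sup>2)"

definition l2n :: "(nat \<Rightarrow> 'y::complex_hilbert) \<Rightarrow> real" where
  "l2n a = (\<Sum>n. (norm (a n))\<^sup>2)"

definition l2i :: "(nat \<Rightarrow> 'y::complex_hilbert) \<Rightarrow> (nat \<Rightarrow> 'y) \<Rightarrow> complex" where
  "l2i a b = (\<Sum>n. cinner (a n) (b n))"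

lemma l2n_nonneg: "sqs a \<Longrightarrow> l2n a \<ge> 0"
  unfolding l2n_def sqs_def by (rule suminf_nonneg) auto

lemma sqs_term_le: "sqs a \<Longrightarrow> (norm (a n))\<^sup>2 \<le> l2n a"
  unfolding l2n_def sqs_def
  using sum_le_suminf[of "\<lambda>n. (norm (a n))\<^sup>2" "{n}"] by simp

lemma sqs_partial_le: "sqs a \<Longrightarrow> (\<Sum>n<N. (norm (a n))\<^sup>2) \<le> l2n a"
  unfolding l2n_def sqs_def
  using sum_le_suminf[of "\<lambda>n. (norm (a n))\<^sup>2" "{..<N}"] by simp

lemma sqs_powser_summable:
  assumes "sqs a" and z: "norm z < 1"
  shows "summable (\<lambda>n. norm (z ^ n *\<^sub>C a n))"
proof (rule summable_comparison_test)
  show "\<exists>N. \<forall>n\<ge>N. norm (norm (z ^ n *\<^sub>C a n)) \<le> (1 + l2n a) * norm z ^ n"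
  proof (intro exI allI impI)
    fix n :: nat
    have "norm (a n) \<le> sqrt (l2n a)" using sqs_term_le[OF assms(1)] by (rule real_le_rsqrt)
    also have "\<dots> \<le> 1 + l2n a"
    proof -
      have l0: "0 \<le> l2n a" by (rule l2n_nonneg[OF assms(1)])
      have "(sqrt (l2n a))\<^sup>2 \<le> (1 + l2n a)\<^sup>2"
        using l0 zero_le_power2[of "l2n a"] by (simp add: power2_sum)
      then show ?thesis by (rule power2_le_imp_le) (use l0 in simp)
    qed
    finally have "norm z ^ n * norm (a n) \<le> norm z ^ n * (1 + l2n a)"
      by (simp add: mult_left_mono)
    then show "norm (norm (z ^ n *\<^sub>C a n)) \<le> (1 + l2n a) * norm z ^ n"
      by (simp add: norm_scaleC norm_power mult.commute)
  qed
  show "summable (\<lambda>n. (1 + l2n a) * norm z ^ n)"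
    using z by (intro summable_mult summable_geometric) simp
qed

definition h2fun :: "(nat \<Rightarrow> 'y::complex_hilbert) \<Rightarrow> complex \<Rightarrow> 'y" where
  "h2fun a z = (\<Sum>n. z ^ n *\<^sub>C a n)"

lemma h2fun_sums: assumes "sqs a" "z \<in> ball 0 1" shows "(\<lambda>n. z ^ n *\<^sub>C a n) sums h2fun a z"
  unfolding h2fun_def
  by (rule summable_sums, rule summable_norm_cancel, rule sqs_powser_summable) (use assms in auto)

lemma h2_coeffs_h2fun: "sqs a \<Longrightarrow> h2_coeffs (h2fun a) a"
  using h2fun_sums by (auto simp: h2_coeffs_def sqs_def)

lemma h2_coeffs_cong: "(\<And>z. z \<in> ball 0 1 \<Longrightarrow> f z = g z) \<Longrightarrow> h2_coeffs f = h2_coeffs g"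
  unfolding h2_coeffs_def by (intro ext) auto

lemma h2_coeffs_unique: "h2_coeffs f a \<Longrightarrow> h2_coeffs f b \<Longrightarrow> a = b"
  unfolding h2_coeffs_def using coeff_unique by blast

lemma h2_coeff_eq: "h2_coeffs f a \<Longrightarrow> h2_coeff f = a"
  unfolding h2_coeff_def using h2_coeffs_unique by blast

lemma h2_coeffs_sqs: "h2_coeffs f a \<Longrightarrow> sqs a"
  by (simp add: h2_coeffs_def sqs_def)

lemma in_H2_coeffs: "in_H2 f \<Longrightarrow> h2_coeffs f (h2_coeff f)"
  unfolding in_H2_def using h2_coeff_eq by metis

lemma h2_norm_eq: "h2_coeffs f a \<Longrightarrow> h2_norm f = sqrt (l2n a)"
  by (simp add: h2_norm_def h2_coeff_eq l2n_def)

lemma h2_inner_eq: "h2_coeffs f a \<Longrightarrow> h2_coeffs g b \<Longrightarrow> h2_inner f g = l2i a b"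
  by (simp add: h2_inner_def h2_coeff_eq l2i_def)

lemma h2_sums_value: "h2_coeffs f a \<Longrightarrow> z \<in> ball 0 1 \<Longrightarrow> f z = (\<Sum>n. z ^ n *\<^sub>C a n)"
  unfolding h2_coeffs_def using sums_unique by blast

lemma h2_coeffs_eq_fun:
  assumes "h2_coeffs f a" "h2_coeffs g a" "z \<in> ball 0 1"
  shows "f z = g z"
  using h2_sums_value[OF assms(1,3)] h2_sums_value[OF assms(2,3)] by simp

lemma sqs_add: assumes "sqs a" "sqs b" shows "sqs (\<lambda>n. a n + b n)"
  unfolding sqs_def
proof (rule summable_comparison_test[OF _ summable_add[OF summable_mult[OF assms(1)[unfolded sqs_def], of 2] summable_mult[OF assms(2)[unfolded sqs_def], of 2]]])
  show "\<exists>N. \<forall>n\<ge>N. norm ((norm (a n + b n))\<^sup>2) \<le> 2 * (norm (a n))\<^sup>2 + 2 * (norm (b n))\<^sup>2"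
  proof (intro exI allI impI)
    fix n
    have "(norm (a n + b n))\<^sup>2 \<le> (norm (a n) + norm (b n))\<^sup>2"
      using norm_triangle_ineq[of "a n" "b n"] by (simp add: power_mono)
    also have "\<dots> \<le> 2 * (norm (a n))\<^sup>2 + 2 * (norm (b n))\<^sup>2"
      unfolding power2_sum using sum_squares_bound[of "norm (a n)" "norm (b n)"] by linarith
    finally show "norm ((norm (a n + b n))\<^sup>2) \<le> 2 * (norm (a n))\<^sup>2 + 2 * (norm (b n))\<^sup>2" by simp
  qed
qed

lemma sqs_scaleC: assumes "sqs a" shows "sqs (\<lambda>n. c *\<^sub>C a n)"
  using summable_mult[OF assms[unfolded sqs_def], of "(cmod c)\<^sup>2"]
  by (simp add: sqs_def norm_scaleC power_mult_distrib)

lemma sqs_minus: assumes "sqs a" shows "sqs (\<lambda>n. - a n)"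
  using assms by (simp add: sqs_def)

lemma sqs_diff: assumes "sqs a" "sqs b" shows "sqs (\<lambda>n. a n - b n)"
  using sqs_add[OF assms(1) sqs_minus[OF assms(2)]] by simp

lemma sqs_shift: "sqs a \<Longrightarrow> sqs (\<lambda>n. a (n + k))"
  unfolding sqs_def by (rule summable_ignore_initial_segment)

lemma sqs_zero: "sqs (\<lambda>n. 0)" by (simp add: sqs_def)

lemma l2_abs_summable:
  assumes "sqs a" "sqs b"
  shows "summable (\<lambda>n. norm (a n) * norm (b n))"
proof (rule summable_comparison_test[OF _ summable_add[OF assms(1)[unfolded sqs_def] assms(2)[unfolded sqs_def]]])
  show "\<exists>N. \<forall>n\<ge>N. norm (norm (a n) * norm (b n)) \<le> (norm (a n))\<^sup>2 + (norm (b n))\<^sup>2"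
  proof (intro exI allI impI)
    fix n
    have "2 * norm (a n) * norm (b n) \<le> (norm (a n))\<^sup>2 + (norm (b n))\<^sup>2"
      using sum_squares_bound[of "norm (a n)" "norm (b n)"] by simp
    moreover have "0 \<le> norm (a n) * norm (b n)" by simp
    ultimately have "norm (a n) * norm (b n) \<le> (norm (a n))\<^sup>2 + (norm (b n))\<^sup>2" by linarith
    then show "norm (norm (a n) * norm (b n)) \<le> (norm (a n))\<^sup>2 + (norm (b n))\<^sup>2" by simp
  qed
qed

lemma l2i_summable:
  assumes "sqs a" "sqs b"
  shows "summable (\<lambda>n. cinner (a n) (b n))"
proof (rule summable_norm_cancel, rule summable_comparison_test[OF _ l2_abs_summable[OF assms]])
  show "\<exists>N. \<forall>n\<ge>N. norm (norm (cinner (a n) (b n))) \<le> norm (a n) * norm (b n)"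
    by (intro exI allI impI) (simp add: Cauchy_Schwarz_c)
qed

lemma l2_CS_real:
  assumes "sqs a" "sqs b"
  shows "(\<Sum>n. norm (a n) * norm (b n)) \<le> sqrt (l2n a) * sqrt (l2n b)"
proof (rule suminf_le_const[OF l2_abs_summable[OF assms]])
  fix N
  have "(\<Sum>n<N. norm (a n) * norm (b n)) = (\<Sum>n<N. \<bar>norm (a n)\<bar> * \<bar>norm (b n)\<bar>)" by simp
  also have "\<dots> \<le> L2_set (\<lambda>n. norm (a n)) {..<N} * L2_set (\<lambda>n. norm (b n)) {..<N}"
    by (rule L2_set_mult_ineq)
  also have "\<dots> \<le> sqrt (l2n a) * sqrt (l2n b)"
    unfolding L2_set_def
    using sqs_partial_le[OF assms(1), of N] sqs_partial_le[OF assms(2), of N] l2n_nonneg[OF assms(1)]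
    by (intro mult_mono) (auto intro: sum_nonneg)
  finally show "(\<Sum>n<N. norm (a n) * norm (b n)) \<le> sqrt (l2n a) * sqrt (l2n b)" .
qed

lemma l2_CS:
  assumes "sqs a" "sqs b"
  shows "cmod (l2i a b) \<le> sqrt (l2n a) * sqrt (l2n b)"
proof -
  have s1: "summable (\<lambda>n. norm (cinner (a n) (b n)))"
    by (rule summable_comparison_test[OF _ l2_abs_summable[OF assms]])
      (intro exI allI impI, simp add: Cauchy_Schwarz_c)
  have "cmod (l2i a b) \<le> (\<Sum>n. norm (cinner (a n) (b n)))"
    unfolding l2i_def by (rule summable_norm[OF s1])
  also have "\<dots> \<le> (\<Sum>n. norm (a n) * norm (b n))"
    by (rule suminf_le[OF _ s1 l2_abs_summable[OF assms]]) (simp add: Cauchy_Schwarz_c)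
  also have "\<dots> \<le> sqrt (l2n a) * sqrt (l2n b)" by (rule l2_CS_real[OF assms])
  finally show ?thesis .
qed

lemma l2i_self: "sqs a \<Longrightarrow> l2i a a = complex_of_real (l2n a)"
proof -
  assume a: "sqs a"
  have "(\<lambda>n. complex_of_real ((norm (a n))\<^sup>2)) sums complex_of_real (l2n a)"
    using a unfolding sqs_def l2n_def by (intro sums_of_real summable_sums)
  then have "(\<lambda>n. cinner (a n) (a n)) sums complex_of_real (l2n a)" by (simp only: cinner_self_norm)
  then show ?thesis unfolding l2i_def by (rule sums_unique[symmetric])
qed

lemma l2i_cnj: "sqs a \<Longrightarrow> sqs b \<Longrightarrow> l2i b a = cnj (l2i a b)"
proof -
  assume a: "sqs a" and b: "sqs b"
  have "(\<lambda>n. cinner (a n) (b n)) sums l2i a b" unfolding l2i_def by (rule summable_sums[OF l2i_summable[OF a b]])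
  then have "(\<lambda>n. cnj (cinner (a n) (b n))) sums cnj (l2i a b)" by (simp add: sums_cnj)
  then have "(\<lambda>n. cinner (b n) (a n)) sums cnj (l2i a b)" by (simp add: cinner_commute[of "a _"])
  then show ?thesis unfolding l2i_def by (rule sums_unique[symmetric])
qed

lemma l2n_diff:
  assumes a: "sqs a" and b: "sqs b"
  shows "l2n (\<lambda>n. a n - b n) = l2n a - 2 * Re (l2i a b) + l2n b"
proof -
  have "(\<lambda>n. (norm (a n))\<^sup>2 - 2 * Re (cinner (a n) (b n)) + (norm (b n))\<^sup>2) sums (l2n a - 2 * Re (l2i a b) + l2n b)"
  proof (intro sums_add sums_diff sums_mult)
    show "(\<lambda>n. (norm (a n))\<^sup>2) sums l2n a" using a unfolding sqs_def l2n_def by (rule summable_sums)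
    show "(\<lambda>n. (norm (b n))\<^sup>2) sums l2n b" using b unfolding sqs_def l2n_def by (rule summable_sums)
    have "(\<lambda>n. cinner (a n) (b n)) sums l2i a b" unfolding l2i_def by (rule summable_sums[OF l2i_summable[OF a b]])
    then show "(\<lambda>n. Re (cinner (a n) (b n))) sums Re (l2i a b)" by (rule sums_Re)
  qed
  then have s: "(\<lambda>n. (norm (a n - b n))\<^sup>2) sums (l2n a - 2 * Re (l2i a b) + l2n b)"
    by (simp add: norm_diff_sq)
  show ?thesis using sums_unique[OF s] by (simp add: l2n_def)
qed

lemma l2n_zero_iff: "sqs a \<Longrightarrow> l2n a = 0 \<longleftrightarrow> (\<forall>n. a n = 0)"
proof -
  assume a: "sqs a"
  have "l2n a = 0 \<longleftrightarrow> (\<forall>n. (norm (a n))\<^sup>2 = 0)"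
    unfolding l2n_def using a unfolding sqs_def by (intro suminf_eq_zero_iff) auto
  then show ?thesis by simp
qed


section \<open>Solutions from contractive colligations\<close>

definition coef :: "('u \<Rightarrow> 'y) \<Rightarrow> ('u \<Rightarrow> 'u) \<Rightarrow> nat \<Rightarrow> 'u \<Rightarrow> 'y" where
  "coef a1 a2 n u = a1 ((a2 ^^ n) u)"

definition HS :: "('u::complex_hilbert \<Rightarrow> 'y::complex_hilbert) \<Rightarrow> ('u \<Rightarrow> 'u) \<Rightarrow> complex \<Rightarrow> 'u \<Rightarrow> 'y" where
  "HS a1 a2 z u = h2fun (\<lambda>n. coef a1 a2 n u) z"

lemma Gamma_apply: "Gamma H u z = H z u" by (simp add: Gamma_def)

lemma clinear_on_addD: "clinear_on S f \<Longrightarrow> x \<in> S \<Longrightarrow> y \<in> S \<Longrightarrow> f (x + y) = f x + f y"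
  by (simp add: clinear_on_def)
lemma clinear_on_scaleD: "clinear_on S f \<Longrightarrow> x \<in> S \<Longrightarrow> f (c *\<^sub>C x) = c *\<^sub>C f x"
  by (simp add: clinear_on_def)

lemma clinear_on_zero:
  assumes "clinear_on S f" "csubspace S" shows "f 0 = 0"
proof -
  have "f (0 *\<^sub>C 0) = 0 *\<^sub>C f 0" using assms csubspace_0 by (blast intro: clinear_on_scaleD)
  then show ?thesis by simp
qed

lemma clinear_on_minusD: "clinear_on S f \<Longrightarrow> csubspace S \<Longrightarrow> x \<in> S \<Longrightarrow> f (- x) = - f x"
  by (simp add: minus_as_scaleC[of x] minus_as_scaleC[of "f x"] clinear_on_scaleD)

lemma clinear_on_diffD: "clinear_on S f \<Longrightarrow> csubspace S \<Longrightarrow> x \<in> S \<Longrightarrow> y \<in> S \<Longrightarrow> f (x - y) = f x - f y"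
  using clinear_on_addD[of S f x "- y"] clinear_on_minusD[of S f y] csubspace_minus[of S y]
  by (simp add: diff_conv_add_uminus del: add_uminus_conv_diff)

lemma csubspace_UNIV: "csubspace UNIV" by (simp add: csubspace_def)

lemma bounded_linear_of_clinear:
  assumes "clinear_on UNIV f" "\<And>x. norm (f x) \<le> norm x * K"
  shows "bounded_linear f"
proof
  show "f (x + y) = f x + f y" for x y using assms(1) by (simp add: clinear_on_addD)
  show "f (r *\<^sub>R x) = r *\<^sub>R f x" for r x using assms(1) by (simp add: scaleR_as_scaleC clinear_on_scaleD)
  show "\<exists>K. \<forall>x. norm (f x) \<le> norm x * K" using assms(2) by blast
qed

locale colligation =
  fixes a1 :: "'u::complex_hilbert \<Rightarrow> 'y::complex_hilbert" and a2 :: "'u \<Rightarrow> 'u"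
  assumes lin1: "clinear_on UNIV a1" and lin2: "clinear_on UNIV a2"
    and contr: "\<And>u. (norm (a1 u))\<^sup>2 + (norm (a2 u))\<^sup>2 \<le> (norm u)\<^sup>2"
begin

abbreviation "c \<equiv> coef a1 a2"
abbreviation "H \<equiv> HS a1 a2"

lemma a1_add: "a1 (x + y) = a1 x + a1 y" using lin1 by (simp add: clinear_on_addD)
lemma a1_scale: "a1 (k *\<^sub>C x) = k *\<^sub>C a1 x" using lin1 by (simp add: clinear_on_scaleD)
lemma a2_add: "a2 (x + y) = a2 x + a2 y" using lin2 by (simp add: clinear_on_addD)
lemma a2_scale: "a2 (k *\<^sub>C x) = k *\<^sub>C a2 x" using lin2 by (simp add: clinear_on_scaleD)

lemma pow_add: "(a2 ^^ n) (x + y) = (a2 ^^ n) x + (a2 ^^ n) y"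
  by (induction n) (simp_all add: a2_add)
lemma pow_scale: "(a2 ^^ n) (k *\<^sub>C x) = k *\<^sub>C (a2 ^^ n) x"
  by (induction n) (simp_all add: a2_scale)

lemma c_add: "c n (x + y) = c n x + c n y" by (simp add: coef_def pow_add a1_add)
lemma c_scale: "c n (k *\<^sub>C x) = k *\<^sub>C c n x" by (simp add: coef_def pow_scale a1_scale)

lemma c_0: "c 0 x = a1 x" by (simp add: coef_def)
lemma c_Suc: "c (Suc n) x = c n (a2 x)" unfolding coef_def funpow_Suc_right comp_def ..

lemma a2_norm: "norm (a2 u) \<le> norm u"
proof -
  have "(norm (a2 u))\<^sup>2 \<le> (norm u)\<^sup>2" using contr[of u] zero_le_power2[of "norm (a1 u)"] by linarith
  then show ?thesis by (rule power2_le_imp_le) simp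
qed

lemma a1_norm: "norm (a1 u) \<le> norm u"
proof -
  have "(norm (a1 u))\<^sup>2 \<le> (norm u)\<^sup>2" using contr[of u] zero_le_power2[of "norm (a2 u)"] by linarith
  then show ?thesis by (rule power2_le_imp_le) simp
qed

lemma pow_norm: "norm ((a2 ^^ n) u) \<le> norm u"
  by (induction n) (auto intro: order_trans[OF a2_norm])

lemma c_norm: "norm (c n u) \<le> norm u"
  unfolding coef_def using a1_norm pow_norm order_trans by blast

lemma partial: "(\<Sum>n<N. (norm (c n u))\<^sup>2) + (norm ((a2 ^^ N) u))\<^sup>2 \<le> (norm u)\<^sup>2"
proof (induction N)
  case 0 then show ?case by simp
next
  case (Suc N)
  have "(norm (c N u))\<^sup>2 + (norm ((a2 ^^ Suc N) u))\<^sup>2 \<le> (norm ((a2 ^^ N) u))\<^sup>2"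
    using contr[of "(a2 ^^ N) u"] by (simp add: coef_def)
  then show ?case using Suc.IH by simp
qed

lemma c_sqs: "sqs (\<lambda>n. c n u)"
  unfolding sqs_def
proof (rule bounded_imp_summable[where B="(norm u)\<^sup>2"])
  show "(\<Sum>k\<le>n. (norm (c k u))\<^sup>2) \<le> (norm u)\<^sup>2" for n
    using partial[where N="Suc n" and u=u] zero_le_power2[of "norm ((a2 ^^ Suc n) u)"]
    unfolding lessThan_Suc_atMost by linarith
qed simp

lemma c_l2n: "l2n (\<lambda>n. c n u) \<le> (norm u)\<^sup>2"
  unfolding l2n_def
proof (rule suminf_le_const)
  show "summable (\<lambda>n. (norm (c n u))\<^sup>2)" using c_sqs by (simp add: sqs_def)
  show "(\<Sum>n<N. (norm (c n u))\<^sup>2) \<le> (norm u)\<^sup>2" for N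
    using partial[where N=N and u=u] zero_le_power2[of "norm ((a2 ^^ N) u)"] by linarith
qed

lemma H_coeffs: "h2_coeffs (Gamma H u) (\<lambda>n. c n u)"
proof -
  have "Gamma H u = h2fun (\<lambda>n. c n u)" by (simp add: Gamma_def HS_def fun_eq_iff)
  then show ?thesis using h2_coeffs_h2fun[OF c_sqs] by simp
qed

lemma H_sums: "z \<in> ball 0 1 \<Longrightarrow> (\<lambda>n. z ^ n *\<^sub>C c n u) sums H z u"
  unfolding HS_def by (rule h2fun_sums[OF c_sqs])

lemma H_add: "z \<in> ball 0 1 \<Longrightarrow> H z (x + y) = H z x + H z y"
proof -
  assume z: "z \<in> ball 0 1"
  have "(\<lambda>n. z ^ n *\<^sub>C c n x + z ^ n *\<^sub>C c n y) sums (H z x + H z y)"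
    by (intro sums_add H_sums z)
  then have "(\<lambda>n. z ^ n *\<^sub>C c n (x + y)) sums (H z x + H z y)"
    by (simp add: c_add scaleC_add_right)
  then show ?thesis using H_sums[OF z, of "x + y"] sums_unique2 by blast
qed

lemma H_scale: "z \<in> ball 0 1 \<Longrightarrow> H z (k *\<^sub>C x) = k *\<^sub>C H z x"
proof -
  assume z: "z \<in> ball 0 1"
  have "(\<lambda>n. k *\<^sub>C (z ^ n *\<^sub>C c n x)) sums (k *\<^sub>C H z x)"
    by (rule bounded_linear.sums[OF bounded_linear_scaleC H_sums[OF z]])
  then have "(\<lambda>n. z ^ n *\<^sub>C c n (k *\<^sub>C x)) sums (k *\<^sub>C H z x)"
    by (simp add: c_scale scaleC_scaleC mult.commute)
  then show ?thesis using H_sums[OF z, of "k *\<^sub>C x"] sums_unique2 by blast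
qed

lemma H_bound: "z \<in> ball 0 1 \<Longrightarrow> norm (H z u) \<le> norm u * (1 / (1 - norm z))"
proof -
  assume z: "z \<in> ball 0 1"
  then have zn: "norm z < 1" by simp
  have s1: "summable (\<lambda>n. norm (z ^ n *\<^sub>C c n u))" by (rule sqs_powser_summable[OF c_sqs zn])
  have s2: "summable (\<lambda>n. norm u * norm z ^ n)" using zn by (intro summable_mult summable_geometric) simp
  have "H z u = (\<Sum>n. z ^ n *\<^sub>C c n u)" using H_sums[OF z] sums_unique by blast
  then have "norm (H z u) \<le> (\<Sum>n. norm (z ^ n *\<^sub>C c n u))" using summable_norm[OF s1] by simp
  also have "\<dots> \<le> (\<Sum>n. norm u * norm z ^ n)"
  proof (rule suminf_le[OF _ s1 s2])
    fix n
    have "norm (z ^ n *\<^sub>C c n u) = norm z ^ n * norm (c n u)" by (simp add: norm_scaleC norm_power)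
    also have "\<dots> \<le> norm z ^ n * norm u" using c_norm by (simp add: mult_left_mono)
    finally show "norm (z ^ n *\<^sub>C c n u) \<le> norm u * norm z ^ n" by (simp add: mult.commute)
  qed
  also have "\<dots> = norm u * (1 / (1 - norm z))"
    using zn by (simp add: suminf_mult suminf_geometric summable_geometric)
  finally show ?thesis .
qed

lemma H_bclin: "z \<in> ball 0 1 \<Longrightarrow> bounded_clinear_op (H z)"
  unfolding bounded_clinear_op_def clinear_on_def
  using H_add H_scale H_bound by blast

lemma H_h2norm: "h2_norm (Gamma H u) \<le> norm u"
proof -
  have "h2_norm (Gamma H u) = sqrt (l2n (\<lambda>n. c n u))" by (rule h2_norm_eq[OF H_coeffs])
  also have "\<dots> \<le> sqrt ((norm u)\<^sup>2)" using c_l2n[of u] by (rule real_sqrt_le_mono)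
  finally show ?thesis by simp
qed

lemma H_ball: "in_frakH2_ball H"
proof -
  have "in_H2 (Gamma H u)" for u using H_coeffs unfolding in_H2_def by blast
  moreover have "\<forall>u. h2_norm (Gamma H u) \<le> 1 * norm u" using H_h2norm by simp
  ultimately show ?thesis
    unfolding in_frakH2_ball_def in_frakH2_def using H_bclin H_h2norm by blast
qed

lemma H_eq: "z \<in> ball 0 1 \<Longrightarrow> a1 x + z *\<^sub>C H z (a2 x) = H z x"
proof -
  assume z: "z \<in> ball 0 1"
  have "(\<lambda>n. z *\<^sub>C (z ^ n *\<^sub>C c n (a2 x))) sums (z *\<^sub>C H z (a2 x))"
    by (rule bounded_linear.sums[OF bounded_linear_scaleC H_sums[OF z]])
  then have "(\<lambda>n. z ^ Suc n *\<^sub>C c (Suc n) x) sums (z *\<^sub>C H z (a2 x))"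
    by (simp add: c_Suc scaleC_scaleC)
  then have "(\<lambda>n. z ^ n *\<^sub>C c n x) sums (z *\<^sub>C H z (a2 x) + z ^ 0 *\<^sub>C c 0 x)"
    by (subst (asm) sums_Suc_iff) simp
  then have "(\<lambda>n. z ^ n *\<^sub>C c n x) sums (z *\<^sub>C H z (a2 x) + a1 x)" by (simp add: c_0 scaleC_one)
  then have "H z x = z *\<^sub>C H z (a2 x) + a1 x" using sums_unique2[OF H_sums[OF z]] by blast
  then show ?thesis by (simp add: add.commute)
qed

lemma H_solution:
  assumes "\<And>x. x \<in> F \<Longrightarrow> a1 x = \<omega>1 x \<and> a2 x = \<omega>2 x"
  shows "H2_interp_solution F \<omega>1 \<omega>2 H"
  unfolding H2_interp_solution_def
proof (intro conjI ballI H_ball)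
  fix z :: complex and x assume "z \<in> ball 0 1" "x \<in> F"
  then show "\<omega>1 x + z *\<^sub>C H z (\<omega>2 x) = H z x" using H_eq[of z x] assms[of x] by simp
qed

end


section \<open>Transfer along equality on the disc\<close>

lemma Gamma_coeffs_cong:
  "(\<And>z. z \<in> ball 0 1 \<Longrightarrow> H z = H' z) \<Longrightarrow> h2_coeffs (Gamma H u) = h2_coeffs (Gamma H' u)"
  by (rule h2_coeffs_cong) (simp add: Gamma_def)

lemma transfer_in_frakH2:
  assumes "\<And>z. z \<in> ball 0 1 \<Longrightarrow> H z = H' z"
  shows "in_frakH2 H = in_frakH2 H'"
proof -
  have c: "\<And>u. h2_coeffs (Gamma H u) = h2_coeffs (Gamma H' u)" using Gamma_coeffs_cong[OF assms] .
  have i: "\<And>u. in_H2 (Gamma H u) = in_H2 (Gamma H' u)" by (simp add: in_H2_def c)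
  have n: "\<And>u. h2_norm (Gamma H u) = h2_norm (Gamma H' u)" by (simp add: h2_norm_def h2_coeff_def c)
  show ?thesis unfolding in_frakH2_def using assms i n by auto
qed

lemma transfer_ball:
  assumes "\<And>z. z \<in> ball 0 1 \<Longrightarrow> H z = H' z"
  shows "in_frakH2_ball H = in_frakH2_ball H'"
proof -
  have c: "\<And>u. h2_coeffs (Gamma H u) = h2_coeffs (Gamma H' u)" using Gamma_coeffs_cong[OF assms] .
  have n: "\<And>u. h2_norm (Gamma H u) = h2_norm (Gamma H' u)" by (simp add: h2_norm_def h2_coeff_def c)
  show ?thesis unfolding in_frakH2_ball_def using transfer_in_frakH2[OF assms] n by auto
qed

lemma transfer_solution:
  assumes "\<And>z. z \<in> ball 0 1 \<Longrightarrow> H z = H' z"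
  shows "H2_interp_solution F \<omega>1 \<omega>2 H = H2_interp_solution F \<omega>1 \<omega>2 H'"
  unfolding H2_interp_solution_def using transfer_ball[OF assms] assms by auto

lemma transfer_coiso:
  assumes "\<And>z. z \<in> ball 0 1 \<Longrightarrow> H z = H' z"
  shows "Gamma_coisometry H = Gamma_coisometry H'"
proof -
  have c: "\<And>u. h2_coeffs (Gamma H u) = h2_coeffs (Gamma H' u)" using Gamma_coeffs_cong[OF assms] .
  have i: "\<And>u g. h2_inner (Gamma H u) g = h2_inner (Gamma H' u) g" by (simp add: h2_inner_def h2_coeff_def c)
  have g: "\<And>u z. z \<in> ball 0 1 \<Longrightarrow> Gamma H u z = Gamma H' u z" by (simp add: Gamma_def assms)
  show ?thesis unfolding Gamma_coisometry_def using transfer_in_frakH2[OF assms] i g by auto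
qed

lemma eq_add_sub: fixes a b c :: "'a::ab_group_add" shows "a = b + c \<Longrightarrow> a - b = c" by simp
lemma sub_eq_add: fixes a b c :: "'a::ab_group_add" shows "a - b = c \<Longrightarrow> a = c + b" by (simp add: diff_eq_eq)

locale setting =
  fixes F :: "'u::complex_hilbert set" and \<omega>1 :: "'u \<Rightarrow> 'y::complex_hilbert" and \<omega>2 :: "'u \<Rightarrow> 'u"
  assumes sub: "csubspace F" and cl: "closed F" and ne: "F \<noteq> UNIV"
    and lin1: "clinear_on F \<omega>1" and lin2: "clinear_on F \<omega>2"
    and contrF: "\<forall>x\<in>F. (norm (\<omega>1 x))\<^sup>2 + (norm (\<omega>2 x))\<^sup>2 \<le> (norm x)\<^sup>2"
begin

sublocale closed_sub F by standard (fact sub, fact cl)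

abbreviation "P \<equiv> orth_proj F"

definition b1 where "b1 u = \<omega>1 (P u)"
definition b2 where "b2 u = \<omega>2 (P u)"

lemma w1_add: "x \<in> F \<Longrightarrow> y \<in> F \<Longrightarrow> \<omega>1 (x + y) = \<omega>1 x + \<omega>1 y" using lin1 by (rule clinear_on_addD)
lemma w2_add: "x \<in> F \<Longrightarrow> y \<in> F \<Longrightarrow> \<omega>2 (x + y) = \<omega>2 x + \<omega>2 y" using lin2 by (rule clinear_on_addD)
lemma w1_scale: "x \<in> F \<Longrightarrow> \<omega>1 (k *\<^sub>C x) = k *\<^sub>C \<omega>1 x" using lin1 by (rule clinear_on_scaleD)
lemma w2_scale: "x \<in> F \<Longrightarrow> \<omega>2 (k *\<^sub>C x) = k *\<^sub>C \<omega>2 x" using lin2 by (rule clinear_on_scaleD)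
lemma w1_diff: "x \<in> F \<Longrightarrow> y \<in> F \<Longrightarrow> \<omega>1 (x - y) = \<omega>1 x - \<omega>1 y" using lin1 sub by (rule clinear_on_diffD)
lemma w2_diff: "x \<in> F \<Longrightarrow> y \<in> F \<Longrightarrow> \<omega>2 (x - y) = \<omega>2 x - \<omega>2 y" using lin2 sub by (rule clinear_on_diffD)
lemma w1_0: "\<omega>1 0 = 0" using lin1 sub by (rule clinear_on_zero)
lemma w2_0: "\<omega>2 0 = 0" using lin2 sub by (rule clinear_on_zero)

lemma w1_norm: "x \<in> F \<Longrightarrow> norm (\<omega>1 x) \<le> norm x"
proof -
  assume x: "x \<in> F"
  have "(norm (\<omega>1 x))\<^sup>2 + (norm (\<omega>2 x))\<^sup>2 \<le> (norm x)\<^sup>2" using contrF x by blast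
  then have "(norm (\<omega>1 x))\<^sup>2 \<le> (norm x)\<^sup>2" using zero_le_power2[of "norm (\<omega>2 x)"] by linarith
  then show ?thesis by (rule power2_le_imp_le) simp
qed

lemma w2_norm: "x \<in> F \<Longrightarrow> norm (\<omega>2 x) \<le> norm x"
proof -
  assume x: "x \<in> F"
  have "(norm (\<omega>1 x))\<^sup>2 + (norm (\<omega>2 x))\<^sup>2 \<le> (norm x)\<^sup>2" using contrF x by blast
  then have "(norm (\<omega>2 x))\<^sup>2 \<le> (norm x)\<^sup>2" using zero_le_power2[of "norm (\<omega>1 x)"] by linarith
  then show ?thesis by (rule power2_le_imp_le) simp
qed

lemma P_P: "P (P u) = P u" by (rule proj_id[OF proj_in])

sublocale C: colligation b1 b2
proof
  show "clinear_on UNIV b1"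
    unfolding clinear_on_def b1_def by (simp add: proj_add proj_scaleC w1_add w1_scale proj_in)
  show "clinear_on UNIV b2"
    unfolding clinear_on_def b2_def by (simp add: proj_add proj_scaleC w2_add w2_scale proj_in)
  show "(norm (b1 u))\<^sup>2 + (norm (b2 u))\<^sup>2 \<le> (norm u)\<^sup>2" for u
  proof -
    have "(norm (b1 u))\<^sup>2 + (norm (b2 u))\<^sup>2 \<le> (norm (P u))\<^sup>2"
      unfolding b1_def b2_def using contrF proj_in by blast
    also have "\<dots> \<le> (norm u)\<^sup>2" using proj_norm[of u] by (simp add: power_mono)
    finally show ?thesis .
  qed
qed

abbreviation "cc \<equiv> coef b1 b2"
abbreviation "H0 \<equiv> HS b1 b2"

lemma b_on_F: "x \<in> F \<Longrightarrow> b1 x = \<omega>1 x \<and> b2 x = \<omega>2 x"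
  by (simp add: b1_def b2_def proj_id)

lemma H0_solution: "H2_interp_solution F \<omega>1 \<omega>2 H0"
  by (rule C.H_solution) (rule b_on_F)

lemma cc_P: "cc n u = cc n (P u)"
  by (cases n) (simp_all add: coef_def b1_def b2_def P_P funpow_Suc_right del: funpow.simps)

lemma cc_zero: "cc n 0 = 0"
  using C.c_scale[of n 0 0] by simp

lemma cc_Pzero: "P w = 0 \<Longrightarrow> cc n w = 0"
  using cc_P[of n w] cc_zero[of n] by simp

lemma cc_0F: "x \<in> F \<Longrightarrow> cc 0 x = \<omega>1 x" by (simp add: C.c_0 b_on_F)
lemma cc_SucF: "x \<in> F \<Longrightarrow> cc (Suc n) x = cc n (\<omega>2 x)" by (simp add: C.c_Suc b_on_F)

lemma cc_diff: "cc n (x - y) = cc n x - cc n y"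
  using C.c_add[of n "x - y" y] by (simp add: eq_diff_eq)

lemma b2_bl: "bounded_linear b2"
  by (rule bounded_linear_of_clinear[where K=1]) (use C.lin2 C.a2_norm in auto)
lemma b1_bl: "bounded_linear b1"
  by (rule bounded_linear_of_clinear[where K=1]) (use C.lin1 C.a1_norm in auto)

lemma central_eq: assumes z: "z \<in> ball 0 1" shows "central_solution F \<omega>1 \<omega>2 z = H0 z"
proof
  fix u
  have zn: "norm z < 1" using z by simp
  have sm: "summable (\<lambda>n. norm (z ^ n *\<^sub>C (b2 ^^ n) u))"
  proof (rule summable_comparison_test[OF _ summable_mult[OF summable_geometric[of "norm z"], of "norm u"]])
    show "\<exists>N. \<forall>n\<ge>N. norm (norm (z ^ n *\<^sub>C (b2 ^^ n) u)) \<le> norm u * norm z ^ n"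
    proof (intro exI allI impI)
      fix n :: nat
      have "norm z ^ n * norm ((b2 ^^ n) u) \<le> norm z ^ n * norm u"
        using C.pow_norm[of n u] by (simp add: mult_left_mono)
      then show "norm (norm (z ^ n *\<^sub>C (b2 ^^ n) u)) \<le> norm u * norm z ^ n"
        by (simp add: norm_scaleC norm_power mult.commute)
    qed
  qed (use zn in simp)
  define V where "V = (\<Sum>n. z ^ n *\<^sub>C (b2 ^^ n) u)"
  have V: "(\<lambda>n. z ^ n *\<^sub>C (b2 ^^ n) u) sums V" unfolding V_def
    by (rule summable_sums[OF summable_norm_cancel[OF sm]])
  have eqV: "V - z *\<^sub>C \<omega>2 (P V) = u"
  proof -
    have "(\<lambda>n. z *\<^sub>C b2 (z ^ n *\<^sub>C (b2 ^^ n) u)) sums (z *\<^sub>C b2 V)"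
      by (rule bounded_linear.sums[OF bounded_linear_scaleC bounded_linear.sums[OF b2_bl V]])
    then have "(\<lambda>n. z ^ Suc n *\<^sub>C (b2 ^^ Suc n) u) sums (z *\<^sub>C b2 V)"
      by (simp add: C.a2_scale scaleC_scaleC)
    then have "(\<lambda>n. z ^ n *\<^sub>C (b2 ^^ n) u) sums (z *\<^sub>C b2 V + z ^ 0 *\<^sub>C (b2 ^^ 0) u)"
      by (subst (asm) sums_Suc_iff)
    then have "(\<lambda>n. z ^ n *\<^sub>C (b2 ^^ n) u) sums (z *\<^sub>C b2 V + u)" by (simp add: scaleC_one)
    then have "V = z *\<^sub>C b2 V + u" by (rule sums_unique2[OF V])
    then show ?thesis unfolding b2_def by (rule eq_add_sub)
  qed
  have uniq: "v = V" if hv: "v - z *\<^sub>C \<omega>2 (P v) = u" for v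
  proof -
    define d where "d = v - V"
    have "d = z *\<^sub>C b2 d"
    proof -
      have hv': "v = u + z *\<^sub>C b2 v" unfolding b2_def by (rule sub_eq_add[OF hv])
      have eV': "V = u + z *\<^sub>C b2 V" unfolding b2_def by (rule sub_eq_add[OF eqV])
      have "b2 d = b2 v - b2 V" using C.a2_add[of d V] by (simp add: d_def eq_diff_eq)
      then have e1: "z *\<^sub>C b2 d = z *\<^sub>C b2 v - z *\<^sub>C b2 V" by (simp add: scaleC_diff_right)
      have "v - V = (u + z *\<^sub>C b2 v) - (u + z *\<^sub>C b2 V)"
        by (rule arg_cong2[where f="(-)"]) (fact hv', fact eV')
      also have "\<dots> = z *\<^sub>C b2 v - z *\<^sub>C b2 V" by (rule add_diff_cancel_left)
      finally have "d = z *\<^sub>C b2 v - z *\<^sub>C b2 V" by (simp only: d_def)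
      then show ?thesis by (rule trans[OF _ e1[symmetric]])
    qed
    then have "norm d = norm (z *\<^sub>C b2 d)" by (rule arg_cong)
    also have "\<dots> = norm z * norm (b2 d)" by (rule norm_scaleC)
    also have "\<dots> \<le> norm z * norm d" using C.a2_norm by (simp add: mult_left_mono)
    finally have "norm d \<le> norm z * norm d" .
    then have "(1 - norm z) * norm d \<le> 0" by (simp add: algebra_simps)
    moreover have "1 - norm z > 0" using zn by simp
    ultimately have "norm d \<le> 0" by (simp add: mult_le_0_iff)
    then show ?thesis by (simp add: d_def)
  qed
  have "(THE v. v - z *\<^sub>C \<omega>2 (P v) = u) = V"
    by (rule the_equality) (fact eqV, rule uniq)
  then have "central_solution F \<omega>1 \<omega>2 z u = b1 V" by (simp add: central_solution_def b1_def)
  moreover have "(\<lambda>n. b1 (z ^ n *\<^sub>C (b2 ^^ n) u)) sums b1 V"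
    by (rule bounded_linear.sums[OF b1_bl V])
  then have "(\<lambda>n. z ^ n *\<^sub>C cc n u) sums b1 V" by (simp add: C.a1_scale coef_def)
  then have "b1 V = H0 z u" by (rule sums_unique2[OF _ C.H_sums[OF z]])
  ultimately show "central_solution F \<omega>1 \<omega>2 z u = H0 z u" by simp
qed

end


lemma l2n_scale: assumes "sqs a" shows "l2n (\<lambda>n. k *\<^sub>C a n) = (cmod k)\<^sup>2 * l2n a"
proof -
  have "(\<lambda>n. (cmod k)\<^sup>2 * (norm (a n))\<^sup>2) sums ((cmod k)\<^sup>2 * l2n a)"
    using assms unfolding sqs_def l2n_def by (intro sums_mult summable_sums)
  then have "(\<lambda>n. (norm (k *\<^sub>C a n))\<^sup>2) sums ((cmod k)\<^sup>2 * l2n a)"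
    by (simp add: norm_scaleC power_mult_distrib)
  then show ?thesis unfolding l2n_def by (rule sums_unique[symmetric])
qed

lemma l2i_zero_left: "l2i (\<lambda>n. 0) b = 0" by (simp add: l2i_def)

lemma sqrt_le_sq: assumes "sqrt x \<le> y" "0 \<le> x" shows "x \<le> y\<^sup>2"
proof -
  have "0 \<le> sqrt x" using assms by simp
  then have "(sqrt x)\<^sup>2 \<le> y\<^sup>2" using assms by (intro power_mono) auto
  then show ?thesis using assms by simp
qed

locale sol = setting +
  fixes H assumes sol: "H2_interp_solution F \<omega>1 \<omega>2 H"
begin

definition hc where "hc n u = h2_coeff (Gamma H u) n"

lemma Hball: "in_frakH2_ball H" using sol by (simp add: H2_interp_solution_def)
lemma Hfr: "in_frakH2 H" using Hball by (simp add: in_frakH2_ball_def)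

lemma hcoeffs: "h2_coeffs (Gamma H u) (\<lambda>n. hc n u)"
proof -
  have "in_H2 (Gamma H u)" using Hfr by (simp add: in_frakH2_def)
  from in_H2_coeffs[OF this] show ?thesis by (simp add: hc_def[abs_def])
qed

lemma hsqs: "sqs (\<lambda>n. hc n u)" by (rule h2_coeffs_sqs[OF hcoeffs])

lemma h_l2n: "l2n (\<lambda>n. hc n u) \<le> (norm u)\<^sup>2"
proof -
  have "h2_norm (Gamma H u) \<le> norm u" using Hball by (simp add: in_frakH2_ball_def)
  then have "sqrt (l2n (\<lambda>n. hc n u)) \<le> norm u" by (simp add: h2_norm_eq[OF hcoeffs])
  then show ?thesis using l2n_nonneg[OF hsqs] by (rule sqrt_le_sq)
qed

lemma H_lin: "z \<in> ball 0 1 \<Longrightarrow> H z (x + y) = H z x + H z y \<and> H z (k *\<^sub>C x) = k *\<^sub>C H z x"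
  using Hfr by (auto simp: in_frakH2_def bounded_clinear_op_def clinear_on_def)

lemma hsums: "z \<in> ball 0 1 \<Longrightarrow> (\<lambda>n. z ^ n *\<^sub>C hc n u) sums H z u"
  using hcoeffs[of u] by (simp add: h2_coeffs_def Gamma_def)

lemma hc_add: "hc n (x + y) = hc n x + hc n y"
proof -
  have "h2_coeffs (Gamma H (x + y)) (\<lambda>n. hc n x + hc n y)"
    unfolding h2_coeffs_def
  proof (intro conjI ballI)
    show "summable (\<lambda>n. (norm (hc n x + hc n y))\<^sup>2)" using sqs_add[OF hsqs hsqs] by (simp add: sqs_def)
    fix z :: complex assume z: "z \<in> ball 0 1"
    have "(\<lambda>n. z ^ n *\<^sub>C hc n x + z ^ n *\<^sub>C hc n y) sums (H z x + H z y)"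
      by (intro sums_add hsums z)
    then show "(\<lambda>n. z ^ n *\<^sub>C (hc n x + hc n y)) sums Gamma H (x + y) z"
      using H_lin[OF z] by (simp add: Gamma_def scaleC_add_right)
  qed
  from h2_coeffs_unique[OF hcoeffs this] show ?thesis by (simp add: fun_eq_iff)
qed

lemma hc_scale: "hc n (k *\<^sub>C x) = k *\<^sub>C hc n x"
proof -
  have "h2_coeffs (Gamma H (k *\<^sub>C x)) (\<lambda>n. k *\<^sub>C hc n x)"
    unfolding h2_coeffs_def
  proof (intro conjI ballI)
    show "summable (\<lambda>n. (norm (k *\<^sub>C hc n x))\<^sup>2)" using sqs_scaleC[OF hsqs] by (simp add: sqs_def)
    fix z :: complex assume z: "z \<in> ball 0 1"
    have "(\<lambda>n. k *\<^sub>C (z ^ n *\<^sub>C hc n x)) sums (k *\<^sub>C H z x)"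
      by (rule bounded_linear.sums[OF bounded_linear_scaleC hsums[OF z]])
    then show "(\<lambda>n. z ^ n *\<^sub>C (k *\<^sub>C hc n x)) sums Gamma H (k *\<^sub>C x) z"
      using H_lin[OF z] by (simp add: Gamma_def scaleC_scaleC mult.commute)
  qed
  from h2_coeffs_unique[OF hcoeffs this] show ?thesis by (simp add: fun_eq_iff)
qed

lemma hc_rec:
  assumes x: "x \<in> F"
  shows "hc 0 x = \<omega>1 x \<and> hc (Suc n) x = hc n (\<omega>2 x)"
proof -
  define s where "s n = (case n of 0 \<Rightarrow> \<omega>1 x | Suc m \<Rightarrow> hc m (\<omega>2 x))" for n
  have "h2_coeffs (Gamma H x) s"
    unfolding h2_coeffs_def
  proof (intro conjI ballI)
    have "summable (\<lambda>n. (norm (s (Suc n)))\<^sup>2)" using hsqs by (simp add: s_def sqs_def)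
    then show "summable (\<lambda>n. (norm (s n))\<^sup>2)" using summable_Suc_iff[of "\<lambda>n. (norm (s n))\<^sup>2"] by simp
    fix z :: complex assume z: "z \<in> ball 0 1"
    have "(\<lambda>n. z *\<^sub>C (z ^ n *\<^sub>C hc n (\<omega>2 x))) sums (z *\<^sub>C H z (\<omega>2 x))"
      by (rule bounded_linear.sums[OF bounded_linear_scaleC hsums[OF z]])
    then have "(\<lambda>n. z ^ Suc n *\<^sub>C s (Suc n)) sums (z *\<^sub>C H z (\<omega>2 x))"
      by (simp add: s_def scaleC_scaleC)
    then have "(\<lambda>n. z ^ n *\<^sub>C s n) sums (z *\<^sub>C H z (\<omega>2 x) + z ^ 0 *\<^sub>C s 0)"
      by (subst (asm) sums_Suc_iff)
    then have "(\<lambda>n. z ^ n *\<^sub>C s n) sums (\<omega>1 x + z *\<^sub>C H z (\<omega>2 x))"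
      by (simp add: s_def scaleC_one add.commute)
    moreover have "\<omega>1 x + z *\<^sub>C H z (\<omega>2 x) = H z x"
      using sol x z by (simp add: H2_interp_solution_def)
    ultimately show "(\<lambda>n. z ^ n *\<^sub>C s n) sums Gamma H x z" by (simp add: Gamma_def)
  qed
  from h2_coeffs_unique[OF hcoeffs this] have "(\<lambda>n. hc n x) = s" .
  then show ?thesis by (simp add: fun_eq_iff s_def split: nat.splits)
qed

end

locale coiso = setting F \<omega>1 \<omega>2
  for F :: "'u::complex_hilbert set" and \<omega>1 :: "'u \<Rightarrow> 'y::complex_hilbert" and \<omega>2 :: "'u \<Rightarrow> 'u" +
  fixes A :: "(complex \<Rightarrow> 'y) \<Rightarrow> 'u"
  assumes A1: "\<forall>g u. in_H2 g \<longrightarrow> h2_inner (Gamma (HS (setting.b1 F \<omega>1) (setting.b2 F \<omega>2)) u) g = cinner u (A g)"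
    and A2: "\<forall>g. in_H2 g \<longrightarrow> (\<forall>z\<in>ball 0 1. Gamma (HS (setting.b1 F \<omega>1) (setting.b2 F \<omega>2)) (A g) z = g z)"
begin

definition Ag where "Ag \<gamma> = A (h2fun \<gamma>)"
definition Miso where "Miso v \<longleftrightarrow> l2n (\<lambda>n. cc n v) = (norm v)\<^sup>2"

lemma cc_Ag: assumes "sqs \<gamma>" shows "cc n (Ag \<gamma>) = \<gamma> n"
proof -
  have hg: "h2_coeffs (h2fun \<gamma>) \<gamma>" by (rule h2_coeffs_h2fun[OF assms])
  then have "in_H2 (h2fun \<gamma>)" by (auto simp: in_H2_def)
  then have "h2_coeffs (Gamma H0 (Ag \<gamma>)) = h2_coeffs (h2fun \<gamma>)"
    unfolding Ag_def using A2 by (intro h2_coeffs_cong) auto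
  then have "h2_coeffs (Gamma H0 (Ag \<gamma>)) \<gamma>" using hg by simp
  from h2_coeffs_unique[OF C.H_coeffs this] show ?thesis by (simp add: fun_eq_iff)
qed

lemma inner_Ag: assumes "sqs \<gamma>" shows "cinner u (Ag \<gamma>) = l2i (\<lambda>n. cc n u) \<gamma>"
proof -
  have hg: "h2_coeffs (h2fun \<gamma>) \<gamma>" by (rule h2_coeffs_h2fun[OF assms])
  then have "in_H2 (h2fun \<gamma>)" by (auto simp: in_H2_def)
  then have "cinner u (Ag \<gamma>) = h2_inner (Gamma H0 u) (h2fun \<gamma>)" using A1 by (simp add: Ag_def)
  also have "\<dots> = l2i (\<lambda>n. cc n u) \<gamma>" by (rule h2_inner_eq[OF C.H_coeffs hg])
  finally show ?thesis .
qed

lemma norm_Ag: assumes "sqs \<gamma>" shows "(norm (Ag \<gamma>))\<^sup>2 = l2n \<gamma>"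
proof -
  have "cinner (Ag \<gamma>) (Ag \<gamma>) = l2i \<gamma> \<gamma>" using inner_Ag[OF assms] cc_Ag[OF assms] by simp
  also have "\<dots> = complex_of_real (l2n \<gamma>)" by (rule l2i_self[OF assms])
  finally show ?thesis by (metis cinner_self_norm of_real_eq_iff)
qed

lemma Miso_Ag: assumes "sqs \<gamma>" shows "Miso (Ag \<gamma>)"
  unfolding Miso_def using cc_Ag[OF assms] norm_Ag[OF assms] by simp

lemma Miso_eq: assumes "Miso v" shows "v = Ag (\<lambda>n. cc n v)"
proof -
  define \<gamma> where "\<gamma> n = cc n v" for n
  have g: "sqs \<gamma>" unfolding \<gamma>_def by (rule C.c_sqs)
  define m where "m = Ag \<gamma>"
  have "cinner v m = complex_of_real (l2n \<gamma>)"
    unfolding m_def using inner_Ag[OF g, of v] l2i_self[OF g] by (simp add: \<gamma>_def[abs_def])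
  moreover have "(norm m)\<^sup>2 = l2n \<gamma>" unfolding m_def by (rule norm_Ag[OF g])
  moreover have "l2n \<gamma> = (norm v)\<^sup>2" using assms by (simp add: Miso_def \<gamma>_def[abs_def])
  ultimately have "(norm (v - m))\<^sup>2 = 0" by (simp add: norm_diff_sq)
  then show ?thesis by (simp add: m_def \<gamma>_def[abs_def])
qed

lemma Ag_F: assumes "sqs \<gamma>" shows "Ag \<gamma> \<in> F"
proof -
  define m where "m = Ag \<gamma>"
  define w where "w = m - P m"
  have Pw: "P w = 0" by (simp add: w_def proj_diff P_P)
  have "cinner w m = l2i (\<lambda>n. cc n w) \<gamma>" unfolding m_def by (rule inner_Ag[OF assms])
  also have "\<dots> = 0" using cc_Pzero[OF Pw] by (simp add: l2i_zero_left)
  finally have "cinner w m = 0" .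
  moreover have "cinner w (P m) = 0" unfolding w_def by (rule proj_orth'[OF proj_in])
  ultimately have "cinner w w = 0" by (simp add: w_def cinner_diff_right)
  then have "m = P m" by (simp add: w_def)
  then show ?thesis using proj_in m_def by metis
qed

lemma Miso_F: "Miso v \<Longrightarrow> v \<in> F"
  using Miso_eq Ag_F C.c_sqs by metis

lemma Miso_w2: assumes "Miso v" shows "Miso (\<omega>2 v)"
proof -
  have vF: "v \<in> F" by (rule Miso_F[OF assms])
  have s: "summable (\<lambda>n. (norm (cc n v))\<^sup>2)" using C.c_sqs by (simp add: sqs_def)
  have "l2n (\<lambda>n. cc n v) = (norm (cc 0 v))\<^sup>2 + l2n (\<lambda>n. cc (Suc n) v)"
    unfolding l2n_def using suminf_split_head[OF s] by simp
  also have "\<dots> = (norm (\<omega>1 v))\<^sup>2 + l2n (\<lambda>n. cc n (\<omega>2 v))" by (simp add: cc_0F cc_SucF vF)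
  finally have e: "(norm v)\<^sup>2 = (norm (\<omega>1 v))\<^sup>2 + l2n (\<lambda>n. cc n (\<omega>2 v))"
    using assms by (simp add: Miso_def)
  have "l2n (\<lambda>n. cc n (\<omega>2 v)) \<le> (norm (\<omega>2 v))\<^sup>2" by (rule C.c_l2n)
  moreover have "(norm (\<omega>1 v))\<^sup>2 + (norm (\<omega>2 v))\<^sup>2 \<le> (norm v)\<^sup>2" using contrF vF by blast
  ultimately show ?thesis unfolding Miso_def using e by linarith
qed

end

locale coiso_sol = coiso + sol
begin

lemma hc_Miso_aux: "\<forall>u. Miso u \<longrightarrow> hc n u = cc n u"
proof (induction n)
  case 0
  show ?case
  proof (intro allI impI)
    fix u assume M: "Miso u"
    have "u \<in> F" by (rule Miso_F[OF M])
    then show "hc 0 u = cc 0 u" by (simp add: hc_rec cc_0F)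
  qed
next
  case (Suc n)
  show ?case
  proof (intro allI impI)
    fix u assume M: "Miso u"
    have "u \<in> F" by (rule Miso_F[OF M])
    then show "hc (Suc n) u = cc (Suc n) u" using Suc.IH Miso_w2[OF M] by (simp add: hc_rec cc_SucF)
  qed
qed

lemma hc_Miso: "Miso u \<Longrightarrow> hc n u = cc n u" using hc_Miso_aux by blast

lemma hc_diff: "hc n (x - y) = hc n x - hc n y"
  using hc_add[of n "x - y" y] by (simp add: eq_diff_eq)

lemma hc_orth: assumes w0: "\<And>n. cc n w = 0" shows "hc n w = 0"
proof -
  define \<gamma> where "\<gamma> n = hc n w" for n
  have g: "sqs \<gamma>" unfolding \<gamma>_def by (rule hsqs)
  define m where "m = Ag \<gamma>"
  have Mm: "Miso m" unfolding m_def by (rule Miso_Ag[OF g])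
  have hm: "hc k m = \<gamma> k" for k using hc_Miso[OF Mm] cc_Ag[OF g] by (simp add: m_def)
  have "cinner w m = 0" unfolding m_def using inner_Ag[OF g, of w] w0 by (simp add: l2i_zero_left)
  then have mw: "cinner m w = 0" by (metis cinner_commute complex_cnj_zero)
  define G where "G = l2n \<gamma>"
  have G0: "G \<ge> 0" unfolding G_def by (rule l2n_nonneg[OF g])
  have nm: "(norm m)\<^sup>2 = G" unfolding m_def G_def by (rule norm_Ag[OF g])
  have key: "(t + 1)\<^sup>2 * G \<le> t\<^sup>2 * G + (norm w)\<^sup>2" if t: "t > 0" for t :: real
  proof -
    define x where "x = complex_of_real t *\<^sub>C m + w"
    have "hc k x = complex_of_real (t + 1) *\<^sub>C \<gamma> k" for k
      by (simp add: x_def hc_add hc_scale hm \<gamma>_def scaleC_add_left scaleC_one)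
    then have "l2n (\<lambda>k. hc k x) = (t + 1)\<^sup>2 * G"
      using l2n_scale[OF g, of "complex_of_real (t + 1)"] t by (simp add: G_def)
    moreover have "(norm x)\<^sup>2 = t\<^sup>2 * G + (norm w)\<^sup>2"
      unfolding x_def norm_add_sq using t mw nm by (simp add: cinner_scaleC_left norm_scaleC power_mult_distrib)
    ultimately show ?thesis using h_l2n[of x] by simp
  qed
  have "G = 0"
  proof (rule ccontr)
    assume "G \<noteq> 0"
    then have Gp: "G > 0" using G0 by simp
    define t where "t = (norm w)\<^sup>2 / G + 1"
    have t: "t > 0" unfolding t_def using Gp by (simp add: add_nonneg_pos)
    have tG: "t * G = (norm w)\<^sup>2 + G" unfolding t_def using Gp by (simp add: field_simps)
    have "(t + 1)\<^sup>2 * G = t\<^sup>2 * G + 2 * (t * G) + G" by (simp add: power2_eq_square algebra_simps)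
    then have "t\<^sup>2 * G + 2 * ((norm w)\<^sup>2 + G) + G \<le> t\<^sup>2 * G + (norm w)\<^sup>2" using key[OF t] tG by simp
    then have "(norm w)\<^sup>2 + 3 * G \<le> 0" by (simp add: algebra_simps)
    then show False using Gp zero_le_power2[of "norm w"] by linarith
  qed
  then have "\<gamma> n = 0" using l2n_zero_iff[OF g] by (simp add: G_def)
  then show ?thesis by (simp add: \<gamma>_def)
qed

lemma hc_eq: "hc n v = cc n v"
proof -
  define m where "m = Ag (\<lambda>k. cc k v)"
  have g: "sqs (\<lambda>k. cc k v)" by (rule C.c_sqs)
  have cm: "cc k m = cc k v" for k unfolding m_def by (rule cc_Ag[OF g])
  have "cc k (v - m) = 0" for k by (simp add: cc_diff cm)
  then have "hc n (v - m) = 0" by (rule hc_orth)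
  moreover have "hc n m = cc n m" by (rule hc_Miso) (simp add: m_def Miso_Ag[OF g])
  ultimately show ?thesis using hc_diff[of n v m] cm by simp
qed

lemma H_eq_H0: assumes z: "z \<in> ball 0 1" shows "H z = H0 z"
proof
  fix u
  have "(\<lambda>n. z ^ n *\<^sub>C cc n u) sums H z u" using hsums[OF z, of u] by (simp add: hc_eq)
  then show "H z u = H0 z u" by (rule sums_unique2[OF _ C.H_sums[OF z]])
qed

end


lemma cinner_ext_left: "(\<And>u. cinner x u = cinner y u) \<Longrightarrow> x = y"
  by (rule cinner_ext) (metis cinner_commute)

lemma l2i_add_right: "sqs a \<Longrightarrow> sqs b \<Longrightarrow> sqs c \<Longrightarrow> l2i a (\<lambda>n. b n + c n) = l2i a b + l2i a c"
  unfolding l2i_def by (simp add: cinner_add_right suminf_add[OF l2i_summable l2i_summable])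

lemma l2i_scale_right: "sqs a \<Longrightarrow> sqs b \<Longrightarrow> l2i a (\<lambda>n. k *\<^sub>C b n) = k * l2i a b"
  unfolding l2i_def by (simp add: cinner_scaleC_right suminf_mult[OF l2i_summable])

lemma l2i_split: assumes "sqs a" "sqs b" shows "l2i a b = cinner (a 0) (b 0) + l2i (\<lambda>n. a (Suc n)) (\<lambda>n. b (Suc n))"
  unfolding l2i_def using suminf_split_head[OF l2i_summable[OF assms]] by simp

lemma sq_cancel: fixes q K :: real assumes "0 < q" "q\<^sup>2 \<le> K * q" shows "q \<le> K"
  using assms by (simp add: power2_eq_square)

lemma cs2: fixes Y V a b :: real shows "(Y*a + V*b)\<^sup>2 \<le> (Y\<^sup>2+V\<^sup>2)*(a\<^sup>2+b\<^sup>2)"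
proof -
  have "0 \<le> (Y*b - V*a)\<^sup>2" by simp
  then show ?thesis unfolding power2_eq_square by (simp add: algebra_simps)
qed

context setting
begin

interpretation U: closed_sub "UNIV :: 'u set" by standard (simp_all add: csubspace_UNIV)

definition Xs where "Xs \<gamma> = (SOME f. \<forall>x. l2i \<gamma> (\<lambda>n. cc n x) = cinner f x)"

lemma Xs: assumes g: "sqs \<gamma>" shows "cinner (Xs \<gamma>) x = l2i \<gamma> (\<lambda>n. cc n x)"
proof -
  have "\<exists>f\<in>UNIV. \<forall>x\<in>UNIV. l2i \<gamma> (\<lambda>n. cc n x) = cinner f x"
  proof (rule U.riesz[where K="sqrt (l2n \<gamma>)"])
    show "l2i \<gamma> (\<lambda>n. cc n (x + y)) = l2i \<gamma> (\<lambda>n. cc n x) + l2i \<gamma> (\<lambda>n. cc n y)" for x y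
      by (simp add: C.c_add l2i_add_right[OF g C.c_sqs C.c_sqs])
    show "l2i \<gamma> (\<lambda>n. cc n (c *\<^sub>C x)) = c * l2i \<gamma> (\<lambda>n. cc n x)" for c x
      by (simp add: C.c_scale l2i_scale_right[OF g C.c_sqs])
    show "cmod (l2i \<gamma> (\<lambda>n. cc n x)) \<le> sqrt (l2n \<gamma>) * norm x" for x
    proof -
      have "cmod (l2i \<gamma> (\<lambda>n. cc n x)) \<le> sqrt (l2n \<gamma>) * sqrt (l2n (\<lambda>n. cc n x))"
        by (rule l2_CS[OF g C.c_sqs])
      also have "\<dots> \<le> sqrt (l2n \<gamma>) * norm x"
        using real_sqrt_le_mono[OF C.c_l2n[of x]] l2n_nonneg[OF g] by (intro mult_left_mono) auto
      finally show ?thesis .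
    qed
  qed
  then have "\<exists>f. \<forall>x. l2i \<gamma> (\<lambda>n. cc n x) = cinner f x" by simp
  then have "\<forall>x. l2i \<gamma> (\<lambda>n. cc n x) = cinner (Xs \<gamma>) x" unfolding Xs_def by (rule someI_ex)
  then show ?thesis by simp
qed

lemma Xs_norm: assumes g: "sqs \<gamma>" shows "(norm (Xs \<gamma>))\<^sup>2 \<le> l2n \<gamma>"
proof -
  define X where "X = Xs \<gamma>"
  have "(norm X)\<^sup>2 = Re (cinner X X)" by (simp add: norm_sq_cinner)
  also have "\<dots> \<le> cmod (cinner X X)" by (rule complex_Re_le_cmod)
  also have "\<dots> = cmod (l2i \<gamma> (\<lambda>n. cc n X))" unfolding X_def by (simp add: Xs[OF g])
  also have "\<dots> \<le> sqrt (l2n \<gamma>) * sqrt (l2n (\<lambda>n. cc n X))" by (rule l2_CS[OF g C.c_sqs])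
  also have "\<dots> \<le> sqrt (l2n \<gamma>) * norm X"
    using real_sqrt_le_mono[OF C.c_l2n[of X]] l2n_nonneg[OF g] by (intro mult_left_mono) auto
  finally have h: "(norm X)\<^sup>2 \<le> sqrt (l2n \<gamma>) * norm X" .
  have "norm X \<le> sqrt (l2n \<gamma>)"
  proof (cases "norm X = 0")
    case True then show ?thesis using l2n_nonneg[OF g] by simp
  next
    case False
    then have "norm X > 0" by simp
    then show ?thesis using h by (simp add: power2_eq_square)
  qed
  then have "(norm X)\<^sup>2 \<le> (sqrt (l2n \<gamma>))\<^sup>2" by (simp add: power_mono)
  then show ?thesis using l2n_nonneg[OF g] by (simp add: X_def)
qed

definition oa where "oa y v = (SOME f. f \<in> F \<and> (\<forall>x\<in>F. cinner f x = cinner y (\<omega>1 x) + cinner v (\<omega>2 x)))"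

lemma oa: "oa y v \<in> F \<and> (\<forall>x\<in>F. cinner (oa y v) x = cinner y (\<omega>1 x) + cinner v (\<omega>2 x))"
proof -
  have "\<exists>f\<in>F. \<forall>x\<in>F. cinner y (\<omega>1 x) + cinner v (\<omega>2 x) = cinner f x"
  proof (rule riesz[where K="norm y + norm v"])
    show "cinner y (\<omega>1 (x + x')) + cinner v (\<omega>2 (x + x')) =
        cinner y (\<omega>1 x) + cinner v (\<omega>2 x) + (cinner y (\<omega>1 x') + cinner v (\<omega>2 x'))"
      if "x \<in> F" "x' \<in> F" for x x'
      using that by (simp add: w1_add w2_add cinner_add_right)
    show "cinner y (\<omega>1 (c *\<^sub>C x)) + cinner v (\<omega>2 (c *\<^sub>C x)) = c * (cinner y (\<omega>1 x) + cinner v (\<omega>2 x))"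
      if "x \<in> F" for c x
      using that by (simp add: w1_scale w2_scale cinner_scaleC_right algebra_simps)
    show "cmod (cinner y (\<omega>1 x) + cinner v (\<omega>2 x)) \<le> (norm y + norm v) * norm x" if x: "x \<in> F" for x
    proof -
      have "cmod (cinner y (\<omega>1 x) + cinner v (\<omega>2 x)) \<le> cmod (cinner y (\<omega>1 x)) + cmod (cinner v (\<omega>2 x))"
        by (rule norm_triangle_ineq)
      also have "\<dots> \<le> norm y * norm (\<omega>1 x) + norm v * norm (\<omega>2 x)"
        by (intro add_mono Cauchy_Schwarz_c)
      also have "\<dots> \<le> norm y * norm x + norm v * norm x"
        using w1_norm[OF x] w2_norm[OF x] by (intro add_mono mult_left_mono) auto
      finally show ?thesis by (simp add: algebra_simps)
    qed
  qed
  then have "\<exists>f. f \<in> F \<and> (\<forall>x\<in>F. cinner f x = cinner y (\<omega>1 x) + cinner v (\<omega>2 x))" by metis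
  then show ?thesis unfolding oa_def by (rule someI_ex)
qed

lemma oa_F: "oa y v \<in> F" using oa by blast
lemma oa_inner: "x \<in> F \<Longrightarrow> cinner (oa y v) x = cinner y (\<omega>1 x) + cinner v (\<omega>2 x)" using oa by blast

lemma Xs_rec: assumes g: "sqs \<gamma>" shows "Xs \<gamma> = oa (\<gamma> 0) (Xs (\<lambda>n. \<gamma> (Suc n)))"
proof (rule cinner_ext_left)
  fix u
  have g': "sqs (\<lambda>n. \<gamma> (Suc n))" using sqs_shift[OF g, of 1] by simp
  have "cinner (Xs \<gamma>) u = l2i \<gamma> (\<lambda>n. cc n u)" by (rule Xs[OF g])
  also have "\<dots> = cinner (\<gamma> 0) (cc 0 u) + l2i (\<lambda>n. \<gamma> (Suc n)) (\<lambda>n. cc (Suc n) u)"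
    by (rule l2i_split[OF g C.c_sqs])
  also have "\<dots> = cinner (\<gamma> 0) (\<omega>1 (P u)) + l2i (\<lambda>n. \<gamma> (Suc n)) (\<lambda>n. cc n (\<omega>2 (P u)))"
    by (simp add: C.c_0 C.c_Suc b1_def b2_def)
  also have "\<dots> = cinner (\<gamma> 0) (\<omega>1 (P u)) + cinner (Xs (\<lambda>n. \<gamma> (Suc n))) (\<omega>2 (P u))"
    by (simp add: Xs[OF g'])
  also have "\<dots> = cinner (oa (\<gamma> 0) (Xs (\<lambda>n. \<gamma> (Suc n)))) (P u)"
    by (simp add: oa_inner proj_in)
  also have "\<dots> = cinner (oa (\<gamma> 0) (Xs (\<lambda>n. \<gamma> (Suc n)))) u"
    by (rule proj_cinner[OF oa_F])
  finally show "cinner (Xs \<gamma>) u = cinner (oa (\<gamma> 0) (Xs (\<lambda>n. \<gamma> (Suc n)))) u" .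
qed

definition dl where "dl y v = (norm y)\<^sup>2 + (norm v)\<^sup>2 - (norm (oa y v))\<^sup>2"

lemma oa_norm: "(norm (oa y v))\<^sup>2 = Re (cinner y (\<omega>1 (oa y v)) + cinner v (\<omega>2 (oa y v)))"
  using oa_inner[OF oa_F, of y v y v] by (simp add: norm_sq_cinner)

lemma dl_nonneg: "dl y v \<ge> 0"
proof -
  define f where "f = oa y v"
  have fF: "f \<in> F" by (simp add: f_def oa_F)
  define p where "p = norm f"
  define a where "a = norm (\<omega>1 f)"
  define b where "b = norm (\<omega>2 f)"
  have ab: "a\<^sup>2 + b\<^sup>2 \<le> p\<^sup>2" using contrF fF by (simp add: a_def b_def p_def)
  have "p\<^sup>2 = Re (cinner y (\<omega>1 f) + cinner v (\<omega>2 f))" unfolding p_def f_def by (rule oa_norm)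
  also have "\<dots> \<le> cmod (cinner y (\<omega>1 f) + cinner v (\<omega>2 f))" by (rule complex_Re_le_cmod)
  also have "\<dots> \<le> cmod (cinner y (\<omega>1 f)) + cmod (cinner v (\<omega>2 f))" by (rule norm_triangle_ineq)
  also have "\<dots> \<le> norm y * a + norm v * b" unfolding a_def b_def by (intro add_mono Cauchy_Schwarz_c)
  finally have h: "p\<^sup>2 \<le> norm y * a + norm v * b" .
  have "(p\<^sup>2)\<^sup>2 \<le> (norm y * a + norm v * b)\<^sup>2" using h by (intro power_mono) auto
  also have "\<dots> \<le> ((norm y)\<^sup>2 + (norm v)\<^sup>2) * (a\<^sup>2 + b\<^sup>2)" by (rule cs2)
  also have "\<dots> \<le> ((norm y)\<^sup>2 + (norm v)\<^sup>2) * p\<^sup>2" using ab by (intro mult_left_mono) auto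
  finally have h2: "(p\<^sup>2)\<^sup>2 \<le> ((norm y)\<^sup>2 + (norm v)\<^sup>2) * p\<^sup>2" .
  have "p\<^sup>2 \<le> (norm y)\<^sup>2 + (norm v)\<^sup>2"
  proof (cases "p = 0")
    case True then show ?thesis by simp
  next
    case False
    then have "p\<^sup>2 > 0" by simp
    then show ?thesis using h2 by (rule sq_cancel)
  qed
  then show ?thesis by (simp add: dl_def p_def f_def)
qed

lemma Xs_norm_rec: "sqs \<gamma> \<Longrightarrow> (norm (Xs \<gamma>))\<^sup>2 = (norm (\<gamma> 0))\<^sup>2 + (norm (Xs (\<lambda>n. \<gamma> (Suc n))))\<^sup>2 - dl (\<gamma> 0) (Xs (\<lambda>n. \<gamma> (Suc n)))"
  using Xs_rec by (simp add: dl_def)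

end


context setting
begin

lemma caseA:
  assumes dz: "\<forall>\<gamma>. sqs \<gamma> \<longrightarrow> dl (\<gamma> 0) (Xs (\<lambda>n. \<gamma> (Suc n))) = 0"
  shows "Gamma_coisometry H0"
proof -
  have step: "(norm (Xs \<gamma>))\<^sup>2 = (norm (\<gamma> 0))\<^sup>2 + (norm (Xs (\<lambda>n. \<gamma> (Suc n))))\<^sup>2" if g: "sqs \<gamma>" for \<gamma>
    using Xs_norm_rec[OF g] dz g by simp
  have iter: "\<forall>\<gamma>. sqs \<gamma> \<longrightarrow> (norm (Xs \<gamma>))\<^sup>2 = (\<Sum>k<N. (norm (\<gamma> k))\<^sup>2) + (norm (Xs (\<lambda>n. \<gamma> (n + N))))\<^sup>2" for N
  proof (induction N)
    case 0 then show ?case by simp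
  next
    case (Suc N)
    show ?case
    proof (intro allI impI)
      fix \<gamma> :: "nat \<Rightarrow> 'y" assume g: "sqs \<gamma>"
      have g': "sqs (\<lambda>n. \<gamma> (Suc n))" using sqs_shift[OF g, of 1] by simp
      have "(norm (Xs \<gamma>))\<^sup>2 = (norm (\<gamma> 0))\<^sup>2 + (norm (Xs (\<lambda>n. \<gamma> (Suc n))))\<^sup>2" by (rule step[OF g])
      also have "(norm (Xs (\<lambda>n. \<gamma> (Suc n))))\<^sup>2 = (\<Sum>k<N. (norm (\<gamma> (Suc k)))\<^sup>2) + (norm (Xs (\<lambda>n. \<gamma> (Suc (n + N)))))\<^sup>2"
        using Suc.IH g' by simp
      finally show "(norm (Xs \<gamma>))\<^sup>2 = (\<Sum>k<Suc N. (norm (\<gamma> k))\<^sup>2) + (norm (Xs (\<lambda>n. \<gamma> (n + Suc N))))\<^sup>2"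
        unfolding sum.lessThan_Suc_shift add_Suc_right by simp
    qed
  qed
  have iso: "(norm (Xs \<gamma>))\<^sup>2 = l2n \<gamma>" if g: "sqs \<gamma>" for \<gamma>
  proof (rule antisym)
    show "(norm (Xs \<gamma>))\<^sup>2 \<le> l2n \<gamma>" by (rule Xs_norm[OF g])
    show "l2n \<gamma> \<le> (norm (Xs \<gamma>))\<^sup>2"
      unfolding l2n_def
    proof (rule suminf_le_const)
      show "summable (\<lambda>n. (norm (\<gamma> n))\<^sup>2)" using g by (simp add: sqs_def)
      show "(\<Sum>k<N. (norm (\<gamma> k))\<^sup>2) \<le> (norm (Xs \<gamma>))\<^sup>2" for N
        using iter[of N] g zero_le_power2[of "norm (Xs (\<lambda>n. \<gamma> (n + N)))"] by simp
    qed
  qed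
  show ?thesis
    unfolding Gamma_coisometry_def
  proof (intro conjI exI[of _ "\<lambda>g. Xs (h2_coeff g)"] allI impI ballI)
    show "in_frakH2 H0" using C.H_ball by (simp add: in_frakH2_ball_def)
  next
    fix g :: "complex \<Rightarrow> 'y" and u assume ig: "in_H2 g"
    define \<gamma> where "\<gamma> = h2_coeff g"
    have hg: "h2_coeffs g \<gamma>" unfolding \<gamma>_def by (rule in_H2_coeffs[OF ig])
    have gs: "sqs \<gamma>" by (rule h2_coeffs_sqs[OF hg])
    have "h2_inner (Gamma H0 u) g = l2i (\<lambda>n. cc n u) \<gamma>" by (rule h2_inner_eq[OF C.H_coeffs hg])
    also have "\<dots> = cnj (l2i \<gamma> (\<lambda>n. cc n u))" by (rule l2i_cnj[OF gs C.c_sqs])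
    also have "\<dots> = cnj (cinner (Xs \<gamma>) u)" by (simp add: Xs[OF gs])
    also have "\<dots> = cinner u (Xs \<gamma>)" by (metis cinner_commute)
    finally show "h2_inner (Gamma H0 u) g = cinner u (Xs (h2_coeff g))" by (simp add: \<gamma>_def)
  next
    fix g :: "complex \<Rightarrow> 'y" and z :: complex assume ig: "in_H2 g" and z: "z \<in> ball 0 1"
    define \<gamma> where "\<gamma> = h2_coeff g"
    have hg: "h2_coeffs g \<gamma>" unfolding \<gamma>_def by (rule in_H2_coeffs[OF ig])
    have gs: "sqs \<gamma>" by (rule h2_coeffs_sqs[OF hg])
    define x where "x = Xs \<gamma>"
    have "l2i (\<lambda>n. cc n x) \<gamma> = cnj (l2i \<gamma> (\<lambda>n. cc n x))" by (rule l2i_cnj[OF gs C.c_sqs])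
    also have "\<dots> = cnj (cinner x x)" by (simp add: Xs[OF gs] x_def)
    also have "\<dots> = complex_of_real ((norm x)\<^sup>2)" by (simp add: cinner_self_norm)
    finally have i: "Re (l2i (\<lambda>n. cc n x) \<gamma>) = (norm x)\<^sup>2" by simp
    have "l2n (\<lambda>n. cc n x - \<gamma> n) = l2n (\<lambda>n. cc n x) - 2 * Re (l2i (\<lambda>n. cc n x) \<gamma>) + l2n \<gamma>"
      by (rule l2n_diff[OF C.c_sqs gs])
    also have "\<dots> \<le> 0" using i iso[OF gs] C.c_l2n[of x] by (simp add: x_def)
    finally have "l2n (\<lambda>n. cc n x - \<gamma> n) \<le> 0" .
    moreover have "l2n (\<lambda>n. cc n x - \<gamma> n) \<ge> 0" by (rule l2n_nonneg[OF sqs_diff[OF C.c_sqs gs]])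
    ultimately have "l2n (\<lambda>n. cc n x - \<gamma> n) = 0" by simp
    then have "\<forall>n. cc n x - \<gamma> n = 0" using l2n_zero_iff[OF sqs_diff[OF C.c_sqs gs]] by simp
    then have "(\<lambda>n. cc n x) = \<gamma>" by (simp add: fun_eq_iff)
    then have "h2_coeffs (Gamma H0 x) \<gamma>" using C.H_coeffs[of x] by simp
    from h2_coeffs_eq_fun[OF this hg z] show "Gamma H0 (Xs (h2_coeff g)) z = g z" by (simp add: x_def \<gamma>_def)
  qed
qed

lemma exists_e: "\<exists>e. P e = 0 \<and> norm e = 1 \<and> cinner e e = 1 \<and> (\<forall>f\<in>F. cinner e f = 0)"
proof -
  obtain u0 where u0: "u0 \<notin> F" using ne by blast
  define e' where "e' = u0 - P u0"
  have e'0: "e' \<noteq> 0"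
  proof
    assume "e' = 0"
    then have "u0 = P u0" by (simp add: e'_def)
    then show False using proj_in[of u0] u0 by metis
  qed
  have Pe': "P e' = 0" by (simp add: e'_def proj_diff P_P)
  have oe': "cinner e' f = 0" if "f \<in> F" for f unfolding e'_def by (rule proj_orth'[OF that])
  define e where "e = complex_of_real (1 / norm e') *\<^sub>C e'"
  have "P e = 0" by (simp add: e_def proj_scaleC Pe')
  moreover have ne1: "norm e = 1" using e'0 by (simp add: e_def norm_scaleC norm_divide)
  moreover have "cinner e e = 1" using ne1 by (simp add: cinner_self_norm)
  moreover have "\<forall>f\<in>F. cinner e f = 0" by (simp add: e_def cinner_scaleC_left oe')
  ultimately show ?thesis by blast
qed

lemma caseB:
  assumes uniq: "\<forall>H. H2_interp_solution F \<omega>1 \<omega>2 H \<longrightarrow> (\<forall>z\<in>ball 0 1. H z = H0 z)"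
    and g: "sqs \<gamma>"
  shows "dl (\<gamma> 0) (Xs (\<lambda>n. \<gamma> (Suc n))) = 0"
proof (rule ccontr)
  define y0 where "y0 = \<gamma> 0"
  define v0 where "v0 = Xs (\<lambda>n. \<gamma> (Suc n))"
  define f0 where "f0 = oa y0 v0"
  define d where "d = dl y0 v0"
  assume "dl (\<gamma> 0) (Xs (\<lambda>n. \<gamma> (Suc n))) \<noteq> 0"
  then have dpos: "d > 0" using dl_nonneg[of y0 v0] by (simp add: d_def y0_def v0_def)
  define cs where "cs = sqrt d"
  have cs: "cs > 0" "cs\<^sup>2 = d" using dpos by (simp_all add: cs_def)
  have f0F: "f0 \<in> F" by (simp add: f0_def oa_F)
  have dd: "(norm y0)\<^sup>2 + (norm v0)\<^sup>2 - (norm f0)\<^sup>2 = d" by (simp add: d_def dl_def f0_def)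
  obtain e where Pe: "P e = 0" and ne1: "norm e = 1" and ee: "cinner e e = 1" and eF: "\<forall>f\<in>F. cinner e f = 0"
    using exists_e by blast
  define k1 where "k1 = complex_of_real (1 / cs) *\<^sub>C (y0 - \<omega>1 f0)"
  define k2 where "k2 = complex_of_real (1 / cs) *\<^sub>C (v0 - \<omega>2 f0)"
  define t1 where "t1 u = \<omega>1 (P u) + cinner e u *\<^sub>C k1" for u
  define t2 where "t2 u = \<omega>2 (P u) + cinner e u *\<^sub>C k2" for u
  have key: "(norm (\<omega>1 a + s *\<^sub>C k1))\<^sup>2 + (norm (\<omega>2 a + s *\<^sub>C k2))\<^sup>2 \<le> (norm a)\<^sup>2 + (cmod s)\<^sup>2"
    if aF: "a \<in> F" for a s
  proof -
    define t where "t = s * complex_of_real (1 / cs)"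
    have sk1: "s *\<^sub>C k1 = t *\<^sub>C (y0 - \<omega>1 f0)" by (simp add: k1_def scaleC_scaleC t_def)
    have sk2: "s *\<^sub>C k2 = t *\<^sub>C (v0 - \<omega>2 f0)" by (simp add: k2_def scaleC_scaleC t_def)
    define b where "b = a - t *\<^sub>C f0"
    have bF: "b \<in> F" using aF f0F sub by (simp add: b_def csubspace_diff csubspace_scaleC)
    have tf: "t *\<^sub>C f0 \<in> F" using f0F sub by (simp add: csubspace_scaleC)
    have wb1: "\<omega>1 b = \<omega>1 a - t *\<^sub>C \<omega>1 f0" by (simp add: b_def w1_diff[OF aF tf] w1_scale[OF f0F])
    have wb2: "\<omega>2 b = \<omega>2 a - t *\<^sub>C \<omega>2 f0" by (simp add: b_def w2_diff[OF aF tf] w2_scale[OF f0F])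
    have e1: "\<omega>1 a + s *\<^sub>C k1 = \<omega>1 b + t *\<^sub>C y0" by (simp add: sk1 wb1 scaleC_diff_right algebra_simps)
    have e2: "\<omega>2 a + s *\<^sub>C k2 = \<omega>2 b + t *\<^sub>C v0" by (simp add: sk2 wb2 scaleC_diff_right algebra_simps)
    have n1: "(norm (\<omega>1 b + t *\<^sub>C y0))\<^sup>2 = (norm (\<omega>1 b))\<^sup>2 + 2 * Re (t * cinner (\<omega>1 b) y0) + (cmod t)\<^sup>2 * (norm y0)\<^sup>2"
      by (simp add: norm_add_sq cinner_scaleC_right norm_scaleC power_mult_distrib)
    have n2: "(norm (\<omega>2 b + t *\<^sub>C v0))\<^sup>2 = (norm (\<omega>2 b))\<^sup>2 + 2 * Re (t * cinner (\<omega>2 b) v0) + (cmod t)\<^sup>2 * (norm v0)\<^sup>2"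
      by (simp add: norm_add_sq cinner_scaleC_right norm_scaleC power_mult_distrib)
    have S: "cinner (\<omega>1 b) y0 + cinner (\<omega>2 b) v0 = cinner b f0"
    proof -
      have "cinner f0 b = cinner y0 (\<omega>1 b) + cinner v0 (\<omega>2 b)" unfolding f0_def by (rule oa_inner[OF bF])
      then have "cnj (cinner f0 b) = cnj (cinner y0 (\<omega>1 b)) + cnj (cinner v0 (\<omega>2 b))" by simp
      then show ?thesis by (metis cinner_commute)
    qed
    have bf: "cinner b f0 = cinner a f0 - cnj t * cinner f0 f0"
      by (simp add: b_def cinner_diff_left cinner_scaleC_left)
    have nb: "(norm b)\<^sup>2 = (norm a)\<^sup>2 - 2 * Re (t * cinner a f0) + (cmod t)\<^sup>2 * (norm f0)\<^sup>2"
      by (simp add: b_def norm_diff_sq cinner_scaleC_right norm_scaleC power_mult_distrib)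
    have ReS: "Re (t * cinner b f0) = Re (t * cinner a f0) - (cmod t)\<^sup>2 * (norm f0)\<^sup>2"
    proof -
      have "t * cinner b f0 = t * cinner a f0 - (t * cnj t) * cinner f0 f0" by (simp add: bf algebra_simps)
      also have "t * cnj t = complex_of_real ((cmod t)\<^sup>2)" by (rule complex_norm_square[symmetric])
      finally show ?thesis by (simp add: cinner_self_norm)
    qed
    have sumre: "Re (t * cinner (\<omega>1 b) y0) + Re (t * cinner (\<omega>2 b) v0) = Re (t * cinner b f0)"
      by (simp only: S[symmetric] distrib_left plus_complex.sel)
    have contrb: "(norm (\<omega>1 b))\<^sup>2 + (norm (\<omega>2 b))\<^sup>2 \<le> (norm b)\<^sup>2" using contrF bF by blast
    have ts: "(cmod t)\<^sup>2 * d = (cmod s)\<^sup>2"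
    proof -
      have "cmod t = cmod s / cs" using cs by (simp add: t_def norm_mult norm_divide)
      then have "(cmod t)\<^sup>2 * d = (cmod s)\<^sup>2 / cs\<^sup>2 * d" by (simp add: power_divide)
      then show ?thesis using cs dpos by simp
    qed
    have td: "(cmod t)\<^sup>2 * (norm y0)\<^sup>2 + (cmod t)\<^sup>2 * (norm v0)\<^sup>2 - (cmod t)\<^sup>2 * (norm f0)\<^sup>2 = (cmod s)\<^sup>2"
    proof -
      have "(cmod t)\<^sup>2 * ((norm y0)\<^sup>2 + (norm v0)\<^sup>2 - (norm f0)\<^sup>2) = (cmod s)\<^sup>2" using ts dd by simp
      then show ?thesis by (simp only: right_diff_distrib distrib_left)
    qed
    show ?thesis unfolding e1 e2 n1 n2
      using sumre ReS contrb nb td by linarith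
  qed
  have t_F: "t1 x = \<omega>1 x \<and> t2 x = \<omega>2 x" if "x \<in> F" for x
    using that eF by (simp add: t1_def t2_def proj_id)
  interpret T: colligation t1 t2
  proof
    show "clinear_on UNIV t1"
      unfolding clinear_on_def t1_def
      by (simp add: proj_add proj_scaleC w1_add w1_scale proj_in cinner_add_right cinner_scaleC_right
          scaleC_add_left scaleC_add_right scaleC_scaleC algebra_simps)
    show "clinear_on UNIV t2"
      unfolding clinear_on_def t2_def
      by (simp add: proj_add proj_scaleC w2_add w2_scale proj_in cinner_add_right cinner_scaleC_right
          scaleC_add_left scaleC_add_right scaleC_scaleC algebra_simps)
    show "(norm (t1 u))\<^sup>2 + (norm (t2 u))\<^sup>2 \<le> (norm u)\<^sup>2" for u
    proof -
      define s where "s = cinner e u"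
      have "(norm (t1 u))\<^sup>2 + (norm (t2 u))\<^sup>2 \<le> (norm (P u))\<^sup>2 + (cmod s)\<^sup>2"
        unfolding t1_def t2_def s_def by (rule key[OF proj_in])
      moreover have "(cmod s)\<^sup>2 \<le> (norm (u - P u))\<^sup>2"
      proof -
        have "s = cinner e (u - P u) + cinner e (P u)" by (simp add: s_def cinner_diff_right)
        then have "s = cinner e (u - P u)" using eF proj_in by simp
        then have "cmod s \<le> norm e * norm (u - P u)" using Cauchy_Schwarz_c by simp
        then have "cmod s \<le> norm (u - P u)" using ne1 by simp
        then show ?thesis by (simp add: power_mono)
      qed
      moreover have "(norm u)\<^sup>2 = (norm (P u))\<^sup>2 + (norm (u - P u))\<^sup>2" by (rule proj_pyth)
      ultimately show ?thesis by linarith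
    qed
  qed
  have Tsol: "H2_interp_solution F \<omega>1 \<omega>2 (HS t1 t2)" by (rule T.H_solution) (rule t_F)
  then have Teq: "\<forall>z\<in>ball 0 1. HS t1 t2 z = H0 z" using uniq by blast
  have ceq: "coef t1 t2 n u = cc n u" for n u
  proof -
    have "h2_coeffs (Gamma (HS t1 t2) u) = h2_coeffs (Gamma H0 u)"
      by (rule Gamma_coeffs_cong) (use Teq in blast)
    then have "h2_coeffs (Gamma H0 u) (\<lambda>n. coef t1 t2 n u)" using T.H_coeffs[of u] by simp
    from h2_coeffs_unique[OF this C.H_coeffs] show ?thesis by (simp add: fun_eq_iff)
  qed
  have te1: "t1 e = k1" using Pe ee by (simp add: t1_def w1_0 scaleC_one)
  have te2: "t2 e = k2" using Pe ee by (simp add: t2_def w2_0 scaleC_one)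
  have k1z: "k1 = 0"
  proof -
    have "k1 = coef t1 t2 0 e" by (simp add: T.c_0 te1)
    also have "\<dots> = cc 0 e" by (rule ceq)
    also have "\<dots> = 0" by (rule cc_Pzero[OF Pe])
    finally show ?thesis .
  qed
  have cck2: "cc n k2 = 0" for n
  proof -
    have "cc n k2 = coef t1 t2 n k2" by (rule ceq[symmetric])
    also have "\<dots> = coef t1 t2 (Suc n) e" by (simp add: T.c_Suc te2)
    also have "\<dots> = cc (Suc n) e" by (rule ceq)
    also have "\<dots> = 0" by (rule cc_Pzero[OF Pe])
    finally show ?thesis .
  qed
  have g': "sqs (\<lambda>n. \<gamma> (Suc n))" using sqs_shift[OF g, of 1] by simp
  have vk2: "cinner v0 k2 = 0"
    unfolding v0_def using Xs[OF g', of k2] cck2 by (simp add: l2i_def)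
  have y0eq: "y0 - \<omega>1 f0 = complex_of_real cs *\<^sub>C k1"
    using cs by (simp add: k1_def scaleC_scaleC scaleC_one)
  have v0eq: "v0 - \<omega>2 f0 = complex_of_real cs *\<^sub>C k2"
    using cs by (simp add: k2_def scaleC_scaleC scaleC_one)
  have "cinner y0 (y0 - \<omega>1 f0) + cinner v0 (v0 - \<omega>2 f0) = 0"
    by (simp add: y0eq v0eq k1z cinner_scaleC_right vk2)
  moreover have "cinner y0 (y0 - \<omega>1 f0) + cinner v0 (v0 - \<omega>2 f0) = complex_of_real d"
  proof -
    have "cinner f0 f0 = cinner y0 (\<omega>1 f0) + cinner v0 (\<omega>2 f0)" unfolding f0_def by (rule oa_inner[OF oa_F])
    then have "cinner y0 (y0 - \<omega>1 f0) + cinner v0 (v0 - \<omega>2 f0) = cinner y0 y0 + cinner v0 v0 - cinner f0 f0"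
      by (simp add: cinner_diff_right)
    also have "\<dots> = complex_of_real ((norm y0)\<^sup>2 + (norm v0)\<^sup>2 - (norm f0)\<^sup>2)" by (simp add: cinner_self_norm)
    finally show ?thesis using dd by simp
  qed
  ultimately show False using dpos by simp
qed

end


theorem corollary0p3:
  fixes F :: "'u::complex_hilbert set"
    and \<omega>1 :: "'u \<Rightarrow> 'y::complex_hilbert"
    and \<omega>2 :: "'u \<Rightarrow> 'u"
  assumes "csubspace F" and "closed F" and "F \<noteq> UNIV"
    and "clinear_on F \<omega>1" and "clinear_on F \<omega>2"
    and "\<forall>x\<in>F. (norm (\<omega>1 x))\<^sup>2 + (norm (\<omega>2 x))\<^sup>2 \<le> (norm x)\<^sup>2"
  shows "(H2_interp_solution F \<omega>1 \<omega>2 (central_solution F \<omega>1 \<omega>2) \<and>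
          (\<forall>H. H2_interp_solution F \<omega>1 \<omega>2 H \<longrightarrow>
                (\<forall>z\<in>ball 0 1. H z = central_solution F \<omega>1 \<omega>2 z)))
         \<longleftrightarrow> Gamma_coisometry (central_solution F \<omega>1 \<omega>2)"
proof -
  interpret S: setting F \<omega>1 \<omega>2 using assms by unfold_locales
  have ceq: "\<And>z. z \<in> ball 0 1 \<Longrightarrow> central_solution F \<omega>1 \<omega>2 z = S.H0 z" by (rule S.central_eq)
  have L: "(H2_interp_solution F \<omega>1 \<omega>2 (central_solution F \<omega>1 \<omega>2) \<and>
          (\<forall>H. H2_interp_solution F \<omega>1 \<omega>2 H \<longrightarrow>
                (\<forall>z\<in>ball 0 1. H z = central_solution F \<omega>1 \<omega>2 z)))
        \<longleftrightarrow> (H2_interp_solution F \<omega>1 \<omega>2 S.H0 \<and>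
          (\<forall>H. H2_interp_solution F \<omega>1 \<omega>2 H \<longrightarrow> (\<forall>z\<in>ball 0 1. H z = S.H0 z)))"
    using transfer_solution[OF ceq] ceq by auto
  have R: "Gamma_coisometry (central_solution F \<omega>1 \<omega>2) \<longleftrightarrow> Gamma_coisometry S.H0"
    by (rule transfer_coiso[OF ceq])
  have main: "(\<forall>H. H2_interp_solution F \<omega>1 \<omega>2 H \<longrightarrow> (\<forall>z\<in>ball 0 1. H z = S.H0 z))
        \<longleftrightarrow> Gamma_coisometry S.H0"
  proof
    assume uniq: "\<forall>H. H2_interp_solution F \<omega>1 \<omega>2 H \<longrightarrow> (\<forall>z\<in>ball 0 1. H z = S.H0 z)"
    have "\<forall>\<gamma>. sqs \<gamma> \<longrightarrow> S.dl (\<gamma> 0) (S.Xs (\<lambda>n. \<gamma> (Suc n))) = 0"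
      using S.caseB[OF uniq] by blast
    then show "Gamma_coisometry S.H0" by (rule S.caseA)
  next
    assume "Gamma_coisometry S.H0"
    then obtain A where A1: "\<forall>g u. in_H2 g \<longrightarrow> h2_inner (Gamma S.H0 u) g = cinner u (A g)"
      and A2: "\<forall>g. in_H2 g \<longrightarrow> (\<forall>z\<in>ball 0 1. Gamma S.H0 (A g) z = g z)"
      unfolding Gamma_coisometry_def by blast
    show "\<forall>H. H2_interp_solution F \<omega>1 \<omega>2 H \<longrightarrow> (\<forall>z\<in>ball 0 1. H z = S.H0 z)"
    proof (intro allI impI ballI)
      fix H and z :: complex assume sol: "H2_interp_solution F \<omega>1 \<omega>2 H" and z: "z \<in> ball 0 1"
      interpret CS: coiso_sol F \<omega>1 \<omega>2 A H
        by (rule coiso_sol.intro, unfold_locales) (use A1 A2 sol in auto)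
      show "H z = S.H0 z" by (rule CS.H_eq_H0[OF z])
    qed
  qed
  show ?thesis using L R main S.H0_solution by blast
qed


end
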